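(* For every M$\Delta$C $\mathbf K$ the following are equivalent: (a) there exist two coprime proper thick ideals of $\mathbf K$; (b) there exist two distinct maximal ideals of $\mathbf K$; (c) there exist two coprime proper principal ideals of $\mathbf K$; (d) $\operatorname{Spc}\mathbf K$ is reducible, i.e. there exist proper closed subsets $Z_1,Z_2\subsetneq\operatorname{Spc}\mathbf K$ with $\operatorname{Spc}\mathbf K=Z_1\cup Z_2$.
   Context: M$\Delta$C: triangulated category with monoidal structure $(\otimes,\mathbf 1)$, $\otimes$ exact in each variable (no rigidity, generation or Noetherian assumptions). Thick ideal: full triangulated subcategory closed under direct summands and under $A\mapsto A\otimes B$, $B\otimes A$ for all $B\in\mathbf K$. $\langle\mathcal S\rangle$ = smallest thick ideal containing $\mathcal S$; principal ideal = $\langle A\rangle$ for a single object $A$; $\mathbf I,\mathbf J$ coprime if $\langle\mathbf I\cup\mathbf J\rangle=\mathbf K$; a maximal ideal is a maximal proper thick ideal. A proper thick ideal $\mathbf P$ is prime if for all thick ideals $\mathbf I,\mathbf J$, $\mathbf I\otimes\mathbf J\subseteq\mathbf P$ (i.e. $A\otimes B\in\mathbf P$ for all $A\in\mathbf I,B\in\mathbf J$) implies $\mathbf I\subseteq\mathbf P$ or $\mathbf J\subseteq\mathbf P$. $\operatorname{Spc}\mathbf K$ is the set of prime ideals with the topology whose closed sets are the intersections of the basic closed sets $V(A)=\{\mathbf P:A\notin\mathbf P\}$, $A\in\mathbf K$. *)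

theory Defs
  imports Main
begin

text \<open>A category is encoded by a set of objects, a set of arrows with domain/codomain,
identities and composition (cComp g f = g o f). The additive structure, zero object,
(chosen) biproducts, the shift functor, the class of distinguished triangles
(u : X -> Y, v : Y -> Z, w : Z -> Sigma X), and the monoidal structure are further data.\<close>

record ('o, 'm) mdc =
  cOb    :: "'o set"
  cAr    :: "'m set"
  cDom   :: "'m \<Rightarrow> 'o"
  cCod   :: "'m \<Rightarrow> 'o"
  cId    :: "'o \<Rightarrow> 'm"
  cComp  :: "'m \<Rightarrow> 'm \<Rightarrow> 'm"
  cPlus  :: "'m \<Rightarrow> 'm \<Rightarrow> 'm"
  cNeg   :: "'m \<Rightarrow> 'm"
  cZero  :: "'o \<Rightarrow> 'o \<Rightarrow> 'm"
  cZobj  :: "'o"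
  cSum   :: "'o \<Rightarrow> 'o \<Rightarrow> 'o"
  cIn1   :: "'o \<Rightarrow> 'o \<Rightarrow> 'm"
  cIn2   :: "'o \<Rightarrow> 'o \<Rightarrow> 'm"
  cPr1   :: "'o \<Rightarrow> 'o \<Rightarrow> 'm"
  cPr2   :: "'o \<Rightarrow> 'o \<Rightarrow> 'm"
  cShift :: "'o \<Rightarrow> 'o"
  cShiftM :: "'m \<Rightarrow> 'm"
  cDist  :: "('m \<times> 'm \<times> 'm) set"
  cTen   :: "'o \<Rightarrow> 'o \<Rightarrow> 'o"
  cTenM  :: "'m \<Rightarrow> 'm \<Rightarrow> 'm"
  cUnit  :: "'o"
  cAssoc :: "'o \<Rightarrow> 'o \<Rightarrow> 'o \<Rightarrow> 'm"
  cLunit :: "'o \<Rightarrow> 'm"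
  cRunit :: "'o \<Rightarrow> 'm"

definition hom :: "('o,'m) mdc \<Rightarrow> 'o \<Rightarrow> 'o \<Rightarrow> 'm set" where
  "hom K X Y = {f \<in> cAr K. cDom K f = X \<and> cCod K f = Y}"

definition is_iso :: "('o,'m) mdc \<Rightarrow> 'm \<Rightarrow> bool" where
  "is_iso K f \<longleftrightarrow> f \<in> cAr K \<and>
     (\<exists>g \<in> hom K (cCod K f) (cDom K f).
        cComp K g f = cId K (cDom K f) \<and> cComp K f g = cId K (cCod K f))"

definition isomorphic :: "('o,'m) mdc \<Rightarrow> 'o \<Rightarrow> 'o \<Rightarrow> bool" where
  "isomorphic K X Y \<longleftrightarrow> (\<exists>f \<in> hom K X Y. is_iso K f)"

definition is_category :: "('o,'m) mdc \<Rightarrow> bool" where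
  "is_category K \<longleftrightarrow>
     (\<forall>f \<in> cAr K. cDom K f \<in> cOb K \<and> cCod K f \<in> cOb K) \<and>
     (\<forall>X \<in> cOb K. cId K X \<in> hom K X X) \<and>
     (\<forall>f \<in> cAr K. \<forall>g \<in> cAr K. cCod K f = cDom K g \<longrightarrow>
         cComp K g f \<in> hom K (cDom K f) (cCod K g)) \<and>
     (\<forall>f \<in> cAr K. cComp K f (cId K (cDom K f)) = f \<and> cComp K (cId K (cCod K f)) f = f) \<and>
     (\<forall>f \<in> cAr K. \<forall>g \<in> cAr K. \<forall>h \<in> cAr K. cCod K f = cDom K g \<longrightarrow> cCod K g = cDom K h \<longrightarrow>
         cComp K h (cComp K g f) = cComp K (cComp K h g) f)"

definition is_additive :: "('o,'m) mdc \<Rightarrow> bool" where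
  "is_additive K \<longleftrightarrow>
     (\<forall>X \<in> cOb K. \<forall>Y \<in> cOb K.
        cZero K X Y \<in> hom K X Y \<and>
        (\<forall>f \<in> hom K X Y. \<forall>g \<in> hom K X Y. cPlus K f g \<in> hom K X Y) \<and>
        (\<forall>f \<in> hom K X Y. cNeg K f \<in> hom K X Y) \<and>
        (\<forall>f \<in> hom K X Y. \<forall>g \<in> hom K X Y. \<forall>h \<in> hom K X Y.
            cPlus K (cPlus K f g) h = cPlus K f (cPlus K g h)) \<and>
        (\<forall>f \<in> hom K X Y. \<forall>g \<in> hom K X Y. cPlus K f g = cPlus K g f) \<and>
        (\<forall>f \<in> hom K X Y. cPlus K f (cZero K X Y) = f) \<and>
        (\<forall>f \<in> hom K X Y. cPlus K f (cNeg K f) = cZero K X Y)) \<and>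
     (\<forall>X \<in> cOb K. \<forall>Y \<in> cOb K. \<forall>Z \<in> cOb K.
        \<forall>f \<in> hom K X Y. \<forall>f' \<in> hom K X Y. \<forall>g \<in> hom K Y Z. \<forall>g' \<in> hom K Y Z.
          cComp K g (cPlus K f f') = cPlus K (cComp K g f) (cComp K g f') \<and>
          cComp K (cPlus K g g') f = cPlus K (cComp K g f) (cComp K g' f)) \<and>
     cZobj K \<in> cOb K \<and>
     (\<forall>X \<in> cOb K. hom K (cZobj K) X = {cZero K (cZobj K) X} \<and>
                   hom K X (cZobj K) = {cZero K X (cZobj K)}) \<and>
     (\<forall>X \<in> cOb K. \<forall>Y \<in> cOb K.
        cSum K X Y \<in> cOb K \<and>
        cIn1 K X Y \<in> hom K X (cSum K X Y) \<and> cIn2 K X Y \<in> hom K Y (cSum K X Y) \<and>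
        cPr1 K X Y \<in> hom K (cSum K X Y) X \<and> cPr2 K X Y \<in> hom K (cSum K X Y) Y \<and>
        cComp K (cPr1 K X Y) (cIn1 K X Y) = cId K X \<and>
        cComp K (cPr2 K X Y) (cIn2 K X Y) = cId K Y \<and>
        cComp K (cPr2 K X Y) (cIn1 K X Y) = cZero K X Y \<and>
        cComp K (cPr1 K X Y) (cIn2 K X Y) = cZero K Y X \<and>
        cPlus K (cComp K (cIn1 K X Y) (cPr1 K X Y)) (cComp K (cIn2 K X Y) (cPr2 K X Y))
          = cId K (cSum K X Y))"

definition shift_equivalence :: "('o,'m) mdc \<Rightarrow> bool" where
  "shift_equivalence K \<longleftrightarrow>
     (\<forall>X \<in> cOb K. cShift K X \<in> cOb K) \<and>
     (\<forall>f \<in> cAr K. cShiftM K f \<in> hom K (cShift K (cDom K f)) (cShift K (cCod K f))) \<and>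
     (\<forall>X \<in> cOb K. cShiftM K (cId K X) = cId K (cShift K X)) \<and>
     (\<forall>f \<in> cAr K. \<forall>g \<in> cAr K. cCod K f = cDom K g \<longrightarrow>
        cShiftM K (cComp K g f) = cComp K (cShiftM K g) (cShiftM K f)) \<and>
     (\<forall>X \<in> cOb K. \<forall>Y \<in> cOb K. \<forall>f \<in> hom K X Y. \<forall>g \<in> hom K X Y.
        cShiftM K (cPlus K f g) = cPlus K (cShiftM K f) (cShiftM K g)) \<and>
     (\<forall>X \<in> cOb K. \<forall>Y \<in> cOb K.
        bij_betw (cShiftM K) (hom K X Y) (hom K (cShift K X) (cShift K Y))) \<and>
     (\<forall>Y \<in> cOb K. \<exists>X \<in> cOb K. isomorphic K (cShift K X) Y)"

definition is_triangle :: "('o,'m) mdc \<Rightarrow> 'm \<times> 'm \<times> 'm \<Rightarrow> bool" where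
  "is_triangle K T \<longleftrightarrow> (case T of (u, v, w) \<Rightarrow>
     u \<in> cAr K \<and> v \<in> cAr K \<and> w \<in> cAr K \<and> cCod K u = cDom K v \<and> cCod K v = cDom K w \<and>
     cCod K w = cShift K (cDom K u))"

definition tri_morph :: "('o,'m) mdc \<Rightarrow> 'm \<times> 'm \<times> 'm \<Rightarrow> 'm \<times> 'm \<times> 'm \<Rightarrow> 'm \<Rightarrow> 'm \<Rightarrow> 'm \<Rightarrow> bool" where
  "tri_morph K T T' a b c \<longleftrightarrow> (case T of (u, v, w) \<Rightarrow> case T' of (u', v', w') \<Rightarrow>
     a \<in> hom K (cDom K u) (cDom K u') \<and> b \<in> hom K (cDom K v) (cDom K v') \<and>
     c \<in> hom K (cDom K w) (cDom K w') \<and>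
     cComp K u' a = cComp K b u \<and> cComp K v' b = cComp K c v \<and>
     cComp K w' c = cComp K (cShiftM K a) w)"

definition is_triangulated :: "('o,'m) mdc \<Rightarrow> bool" where
  "is_triangulated K \<longleftrightarrow>
     \<comment> \<open>TR1\<close>
     (\<forall>T \<in> cDist K. is_triangle K T) \<and>
     (\<forall>T \<in> cDist K. \<forall>T'. is_triangle K T' \<and>
        (\<exists>a b c. tri_morph K T T' a b c \<and> is_iso K a \<and> is_iso K b \<and> is_iso K c) \<longrightarrow> T' \<in> cDist K) \<and>
     (\<forall>X \<in> cOb K. (cId K X, cZero K X (cZobj K), cZero K (cZobj K) (cShift K X)) \<in> cDist K) \<and>
     (\<forall>u \<in> cAr K. \<exists>v w. (u, v, w) \<in> cDist K) \<and>
     \<comment> \<open>TR2 (rotation)\<close>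
     (\<forall>u v w. is_triangle K (u, v, w) \<longrightarrow>
        ((u, v, w) \<in> cDist K \<longleftrightarrow> (v, w, cNeg K (cShiftM K u)) \<in> cDist K)) \<and>
     \<comment> \<open>TR3\<close>
     (\<forall>u v w u' v' w' a b. (u, v, w) \<in> cDist K \<longrightarrow> (u', v', w') \<in> cDist K \<longrightarrow>
        a \<in> hom K (cDom K u) (cDom K u') \<longrightarrow> b \<in> hom K (cDom K v) (cDom K v') \<longrightarrow>
        cComp K u' a = cComp K b u \<longrightarrow>
        (\<exists>c. tri_morph K (u, v, w) (u', v', w') a b c)) \<and>
     \<comment> \<open>TR4 (octahedral axiom)\<close>
     (\<forall>u v j k l i m n. (u, j, k) \<in> cDist K \<longrightarrow> (v, l, i) \<in> cDist K \<longrightarrow>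
        (cComp K v u, m, n) \<in> cDist K \<longrightarrow> cCod K u = cDom K v \<longrightarrow>
        (\<exists>f g. f \<in> hom K (cCod K j) (cCod K m) \<and> g \<in> hom K (cCod K m) (cCod K l) \<and>
           cComp K f j = cComp K m v \<and> cComp K n f = k \<and> cComp K g m = l \<and>
           cComp K i g = cComp K (cShiftM K u) n \<and>
           (f, g, cComp K (cShiftM K j) i) \<in> cDist K))"

definition is_monoidal :: "('o,'m) mdc \<Rightarrow> bool" where
  "is_monoidal K \<longleftrightarrow>
     (\<forall>A \<in> cOb K. \<forall>B \<in> cOb K. cTen K A B \<in> cOb K) \<and>
     (\<forall>f \<in> cAr K. \<forall>g \<in> cAr K.
        cTenM K f g \<in> hom K (cTen K (cDom K f) (cDom K g)) (cTen K (cCod K f) (cCod K g))) \<and>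
     (\<forall>A \<in> cOb K. \<forall>B \<in> cOb K. cTenM K (cId K A) (cId K B) = cId K (cTen K A B)) \<and>
     (\<forall>f \<in> cAr K. \<forall>f' \<in> cAr K. \<forall>g \<in> cAr K. \<forall>g' \<in> cAr K.
        cCod K f = cDom K f' \<longrightarrow> cCod K g = cDom K g' \<longrightarrow>
        cTenM K (cComp K f' f) (cComp K g' g) = cComp K (cTenM K f' g') (cTenM K f g)) \<and>
     cUnit K \<in> cOb K \<and>
     (\<forall>A \<in> cOb K. \<forall>B \<in> cOb K. \<forall>C \<in> cOb K.
        cAssoc K A B C \<in> hom K (cTen K (cTen K A B) C) (cTen K A (cTen K B C)) \<and>
        is_iso K (cAssoc K A B C)) \<and>
     (\<forall>f \<in> cAr K. \<forall>g \<in> cAr K. \<forall>h \<in> cAr K.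
        cComp K (cAssoc K (cCod K f) (cCod K g) (cCod K h)) (cTenM K (cTenM K f g) h) =
        cComp K (cTenM K f (cTenM K g h)) (cAssoc K (cDom K f) (cDom K g) (cDom K h))) \<and>
     (\<forall>A \<in> cOb K. cLunit K A \<in> hom K (cTen K (cUnit K) A) A \<and> is_iso K (cLunit K A) \<and>
                   cRunit K A \<in> hom K (cTen K A (cUnit K)) A \<and> is_iso K (cRunit K A)) \<and>
     (\<forall>f \<in> cAr K.
        cComp K (cLunit K (cCod K f)) (cTenM K (cId K (cUnit K)) f) = cComp K f (cLunit K (cDom K f)) \<and>
        cComp K (cRunit K (cCod K f)) (cTenM K f (cId K (cUnit K))) = cComp K f (cRunit K (cDom K f))) \<and>
     (\<forall>A \<in> cOb K. \<forall>B \<in> cOb K. \<forall>C \<in> cOb K. \<forall>D \<in> cOb K.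
        cComp K (cAssoc K A B (cTen K C D)) (cAssoc K (cTen K A B) C D) =
        cComp K (cTenM K (cId K A) (cAssoc K B C D))
          (cComp K (cAssoc K A (cTen K B C) D) (cTenM K (cAssoc K A B C) (cId K D)))) \<and>
     (\<forall>A \<in> cOb K. \<forall>B \<in> cOb K.
        cComp K (cTenM K (cId K A) (cLunit K B)) (cAssoc K A (cUnit K) B) =
        cTenM K (cRunit K A) (cId K B))"

definition tensor_exact :: "('o,'m) mdc \<Rightarrow> bool" where
  "tensor_exact K \<longleftrightarrow>
     (\<forall>A \<in> cOb K.
       (\<forall>X \<in> cOb K. \<forall>Y \<in> cOb K. \<forall>f \<in> hom K X Y. \<forall>g \<in> hom K X Y.
          cTenM K (cId K A) (cPlus K f g) = cPlus K (cTenM K (cId K A) f) (cTenM K (cId K A) g) \<and>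
          cTenM K (cPlus K f g) (cId K A) = cPlus K (cTenM K f (cId K A)) (cTenM K g (cId K A))) \<and>
       (\<exists>\<tau>. (\<forall>X \<in> cOb K. \<tau> X \<in> hom K (cTen K A (cShift K X)) (cShift K (cTen K A X)) \<and> is_iso K (\<tau> X)) \<and>
            (\<forall>f \<in> cAr K. cComp K (\<tau> (cCod K f)) (cTenM K (cId K A) (cShiftM K f)) =
                          cComp K (cShiftM K (cTenM K (cId K A) f)) (\<tau> (cDom K f))) \<and>
            (\<forall>u v w. (u, v, w) \<in> cDist K \<longrightarrow>
               (cTenM K (cId K A) u, cTenM K (cId K A) v,
                cComp K (\<tau> (cDom K u)) (cTenM K (cId K A) w)) \<in> cDist K)) \<and>
       (\<exists>\<tau>. (\<forall>X \<in> cOb K. \<tau> X \<in> hom K (cTen K (cShift K X) A) (cShift K (cTen K X A)) \<and> is_iso K (\<tau> X)) \<and>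
            (\<forall>f \<in> cAr K. cComp K (\<tau> (cCod K f)) (cTenM K (cShiftM K f) (cId K A)) =
                          cComp K (cShiftM K (cTenM K f (cId K A))) (\<tau> (cDom K f))) \<and>
            (\<forall>u v w. (u, v, w) \<in> cDist K \<longrightarrow>
               (cTenM K u (cId K A), cTenM K v (cId K A),
                cComp K (\<tau> (cDom K u)) (cTenM K w (cId K A))) \<in> cDist K)))"

definition MDC :: "('o,'m) mdc \<Rightarrow> bool" where
  "MDC K \<longleftrightarrow> is_category K \<and> is_additive K \<and> shift_equivalence K \<and>
              is_triangulated K \<and> is_monoidal K \<and> tensor_exact K"

text \<open>Subcategories are full, hence identified with their sets of objects.\<close>

definition thick_ideal :: "('o,'m) mdc \<Rightarrow> 'o set \<Rightarrow> bool" where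
  "thick_ideal K I \<longleftrightarrow>
     I \<subseteq> cOb K \<and> cZobj K \<in> I \<and>
     (\<forall>X \<in> cOb K. cShift K X \<in> I \<longleftrightarrow> X \<in> I) \<and>
     (\<forall>u v w. (u, v, w) \<in> cDist K \<longrightarrow>
        (let X = cDom K u; Y = cDom K v; Z = cDom K w in
          (X \<in> I \<longrightarrow> Y \<in> I \<longrightarrow> Z \<in> I) \<and> (Y \<in> I \<longrightarrow> Z \<in> I \<longrightarrow> X \<in> I) \<and>
          (Z \<in> I \<longrightarrow> X \<in> I \<longrightarrow> Y \<in> I))) \<and>
     (\<forall>X \<in> cOb K. \<forall>X' \<in> cOb K. \<forall>Y \<in> I. isomorphic K Y (cSum K X X') \<longrightarrow> X \<in> I) \<and>
     (\<forall>A \<in> I. \<forall>B \<in> cOb K. cTen K A B \<in> I \<and> cTen K B A \<in> I)"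

definition gen_ideal :: "('o,'m) mdc \<Rightarrow> 'o set \<Rightarrow> 'o set" where
  "gen_ideal K S = \<Inter> {I. thick_ideal K I \<and> S \<subseteq> I}"

definition principal_ideal :: "('o,'m) mdc \<Rightarrow> 'o set \<Rightarrow> bool" where
  "principal_ideal K I \<longleftrightarrow> (\<exists>A \<in> cOb K. I = gen_ideal K {A})"

definition proper_ideal :: "('o,'m) mdc \<Rightarrow> 'o set \<Rightarrow> bool" where
  "proper_ideal K I \<longleftrightarrow> thick_ideal K I \<and> I \<noteq> cOb K"

definition coprime :: "('o,'m) mdc \<Rightarrow> 'o set \<Rightarrow> 'o set \<Rightarrow> bool" where
  "coprime K I J \<longleftrightarrow> gen_ideal K (I \<union> J) = cOb K"

definition maximal_ideal :: "('o,'m) mdc \<Rightarrow> 'o set \<Rightarrow> bool" where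
  "maximal_ideal K M \<longleftrightarrow> proper_ideal K M \<and>
     (\<forall>I. proper_ideal K I \<longrightarrow> M \<subseteq> I \<longrightarrow> I = M)"

definition prime_ideal :: "('o,'m) mdc \<Rightarrow> 'o set \<Rightarrow> bool" where
  "prime_ideal K P \<longleftrightarrow> proper_ideal K P \<and>
     (\<forall>I J. thick_ideal K I \<longrightarrow> thick_ideal K J \<longrightarrow>
        (\<forall>A \<in> I. \<forall>B \<in> J. cTen K A B \<in> P) \<longrightarrow> I \<subseteq> P \<or> J \<subseteq> P)"

definition Spc :: "('o,'m) mdc \<Rightarrow> 'o set set" where
  "Spc K = {P. prime_ideal K P}"

definition supp :: "('o,'m) mdc \<Rightarrow> 'o \<Rightarrow> 'o set set" where
  "supp K A = {P \<in> Spc K. A \<notin> P}"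

definition spc_closed :: "('o,'m) mdc \<Rightarrow> 'o set set \<Rightarrow> bool" where
  "spc_closed K Z \<longleftrightarrow> (\<exists>\<A> \<subseteq> cOb K. Z = Spc K \<inter> (\<Inter>A \<in> \<A>. supp K A))"

end

theory Submission
  imports Defs
begin

locale mdcK =
  fixes K :: "('o,'m) mdc"
  assumes mdc: "MDC K"
begin

lemma cat: "is_category K" and add: "is_additive K" and shf: "shift_equivalence K"
  and tri: "is_triangulated K" and mon: "is_monoidal K" and tex: "tensor_exact K"
  using mdc unfolding MDC_def by auto

lemma homD: "f \<in> hom K X Y \<Longrightarrow> f \<in> cAr K \<and> cDom K f = X \<and> cCod K f = Y"
  by (simp add: hom_def)
lemma homI: "f \<in> cAr K \<Longrightarrow> f \<in> hom K (cDom K f) (cCod K f)"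
  by (simp add: hom_def)

lemma ar_ob: "f \<in> cAr K \<Longrightarrow> cDom K f \<in> cOb K \<and> cCod K f \<in> cOb K"
  using cat unfolding is_category_def by auto

lemma hom_ob: "f \<in> hom K X Y \<Longrightarrow> X \<in> cOb K \<and> Y \<in> cOb K"
  using ar_ob homD by blast

lemma id_hom[simp]: "X \<in> cOb K \<Longrightarrow> cId K X \<in> hom K X X"
  using cat unfolding is_category_def by auto

lemma comp_hom: "f \<in> hom K X Y \<Longrightarrow> g \<in> hom K Y Z \<Longrightarrow> cComp K g f \<in> hom K X Z"
  using cat unfolding is_category_def hom_def by auto

lemma comp_id_l: "f \<in> hom K X Y \<Longrightarrow> cComp K (cId K Y) f = f"
  using cat unfolding is_category_def hom_def by auto
lemma comp_id_r: "f \<in> hom K X Y \<Longrightarrow> cComp K f (cId K X) = f"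
  using cat unfolding is_category_def hom_def by auto

lemma assoc: "f \<in> hom K X Y \<Longrightarrow> g \<in> hom K Y Z \<Longrightarrow> h \<in> hom K Z W \<Longrightarrow>
   cComp K h (cComp K g f) = cComp K (cComp K h g) f"
  using cat unfolding is_category_def hom_def by auto

lemma zero_hom: "X \<in> cOb K \<Longrightarrow> Y \<in> cOb K \<Longrightarrow> cZero K X Y \<in> hom K X Y"
  using add unfolding is_additive_def by auto
lemma plus_hom: "f \<in> hom K X Y \<Longrightarrow> g \<in> hom K X Y \<Longrightarrow> cPlus K f g \<in> hom K X Y"
  using add hom_ob unfolding is_additive_def by meson
lemma neg_hom: "f \<in> hom K X Y \<Longrightarrow> cNeg K f \<in> hom K X Y"
  using add hom_ob unfolding is_additive_def by meson
lemma plus_assoc: "f \<in> hom K X Y \<Longrightarrow> g \<in> hom K X Y \<Longrightarrow> h \<in> hom K X Y \<Longrightarrow>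
   cPlus K (cPlus K f g) h = cPlus K f (cPlus K g h)"
  using add hom_ob unfolding is_additive_def by meson
lemma plus_comm: "f \<in> hom K X Y \<Longrightarrow> g \<in> hom K X Y \<Longrightarrow> cPlus K f g = cPlus K g f"
  using add hom_ob unfolding is_additive_def by meson
lemma plus_zero: "f \<in> hom K X Y \<Longrightarrow> cPlus K f (cZero K X Y) = f"
  using add hom_ob unfolding is_additive_def by meson
lemma plus_neg: "f \<in> hom K X Y \<Longrightarrow> cPlus K f (cNeg K f) = cZero K X Y"
  using add hom_ob unfolding is_additive_def by meson
lemma distl: "f \<in> hom K X Y \<Longrightarrow> f' \<in> hom K X Y \<Longrightarrow> g \<in> hom K Y Z \<Longrightarrow>
   cComp K g (cPlus K f f') = cPlus K (cComp K g f) (cComp K g f')"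
proof -
  assume a: "f \<in> hom K X Y" "f' \<in> hom K X Y" "g \<in> hom K Y Z"
  then have "X \<in> cOb K" "Y \<in> cOb K" "Z \<in> cOb K" using hom_ob by auto
  with a add show ?thesis unfolding is_additive_def by blast
qed
lemma distr: "f \<in> hom K X Y \<Longrightarrow> g \<in> hom K Y Z \<Longrightarrow> g' \<in> hom K Y Z \<Longrightarrow>
   cComp K (cPlus K g g') f = cPlus K (cComp K g f) (cComp K g' f)"
proof -
  assume a: "f \<in> hom K X Y" "g \<in> hom K Y Z" "g' \<in> hom K Y Z"
  then have "X \<in> cOb K" "Y \<in> cOb K" "Z \<in> cOb K" using hom_ob by auto
  with a add show ?thesis unfolding is_additive_def by blast
qed

lemma zobj: "cZobj K \<in> cOb K" using add unfolding is_additive_def by auto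
lemma hom_from0: "X \<in> cOb K \<Longrightarrow> hom K (cZobj K) X = {cZero K (cZobj K) X}"
  using add unfolding is_additive_def by auto
lemma hom_to0: "X \<in> cOb K \<Longrightarrow> hom K X (cZobj K) = {cZero K X (cZobj K)}"
  using add unfolding is_additive_def by auto

lemma sum_facts: "X \<in> cOb K \<Longrightarrow> Y \<in> cOb K \<Longrightarrow>
        cSum K X Y \<in> cOb K \<and>
        cIn1 K X Y \<in> hom K X (cSum K X Y) \<and> cIn2 K X Y \<in> hom K Y (cSum K X Y) \<and>
        cPr1 K X Y \<in> hom K (cSum K X Y) X \<and> cPr2 K X Y \<in> hom K (cSum K X Y) Y \<and>
        cComp K (cPr1 K X Y) (cIn1 K X Y) = cId K X \<and>
        cComp K (cPr2 K X Y) (cIn2 K X Y) = cId K Y \<and>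
        cComp K (cPr2 K X Y) (cIn1 K X Y) = cZero K X Y \<and>
        cComp K (cPr1 K X Y) (cIn2 K X Y) = cZero K Y X \<and>
        cPlus K (cComp K (cIn1 K X Y) (cPr1 K X Y)) (cComp K (cIn2 K X Y) (cPr2 K X Y))
          = cId K (cSum K X Y)"
  using add unfolding is_additive_def by auto

lemma idem_zero: assumes f: "f \<in> hom K X Y" and e: "cPlus K f f = f" shows "f = cZero K X Y"
proof -
  have n: "cNeg K f \<in> hom K X Y" using f neg_hom by auto
  have "cZero K X Y = cPlus K f (cNeg K f)" using plus_neg f by auto
  also have "\<dots> = cPlus K (cPlus K f f) (cNeg K f)" using e by simp
  also have "\<dots> = cPlus K f (cPlus K f (cNeg K f))" using plus_assoc f n by auto
  also have "\<dots> = f" using plus_neg plus_zero f by auto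
  finally show ?thesis by simp
qed

lemma comp_zero_r: assumes g: "g \<in> hom K Y Z" and X: "X \<in> cOb K"
  shows "cComp K g (cZero K X Y) = cZero K X Z"
proof -
  have Y: "Y \<in> cOb K" using g hom_ob by auto
  have z: "cZero K X Y \<in> hom K X Y" using zero_hom X Y by auto
  have "cComp K g (cZero K X Y) = cComp K g (cPlus K (cZero K X Y) (cZero K X Y))"
    using plus_zero z by simp
  also have "\<dots> = cPlus K (cComp K g (cZero K X Y)) (cComp K g (cZero K X Y))"
    using distl z g by blast
  finally have "cPlus K (cComp K g (cZero K X Y)) (cComp K g (cZero K X Y)) = cComp K g (cZero K X Y)" by simp
  then show ?thesis using idem_zero comp_hom z g by blast
qed

lemma comp_zero_l: assumes f: "f \<in> hom K X Y" and Z: "Z \<in> cOb K"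
  shows "cComp K (cZero K Y Z) f = cZero K X Z"
proof -
  have Y: "Y \<in> cOb K" using f hom_ob by auto
  have z: "cZero K Y Z \<in> hom K Y Z" using zero_hom Z Y by auto
  have "cComp K (cZero K Y Z) f = cComp K (cPlus K (cZero K Y Z) (cZero K Y Z)) f"
    using plus_zero z by simp
  also have "\<dots> = cPlus K (cComp K (cZero K Y Z) f) (cComp K (cZero K Y Z) f)"
    using distr z f by blast
  finally have "cPlus K (cComp K (cZero K Y Z) f) (cComp K (cZero K Y Z) f) = cComp K (cZero K Y Z) f" by simp
  then show ?thesis using idem_zero comp_hom z f by blast
qed

lemma zero_plus: "f \<in> hom K X Y \<Longrightarrow> cPlus K (cZero K X Y) f = f"
  using plus_comm plus_zero zero_hom hom_ob by metis

lemma to0_eq: "f \<in> hom K X (cZobj K) \<Longrightarrow> f = cZero K X (cZobj K)"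
  using hom_to0 hom_ob by blast
lemma from0_eq: "f \<in> hom K (cZobj K) X \<Longrightarrow> f = cZero K (cZobj K) X"
  using hom_from0 hom_ob by blast

lemma id0: "cId K (cZobj K) = cZero K (cZobj K) (cZobj K)"
  using to0_eq id_hom zobj by blast

lemma through0: "f \<in> hom K X (cZobj K) \<Longrightarrow> g \<in> hom K (cZobj K) Y \<Longrightarrow> cComp K g f = cZero K X Y"
  using to0_eq comp_zero_r hom_ob by metis

end

context mdcK begin

lemma mk_iso: assumes f: "f \<in> hom K X Y" and g: "g \<in> hom K Y X"
  and gf: "cComp K g f = cId K X" and fg: "cComp K f g = cId K Y"
  shows "is_iso K f" "isomorphic K X Y"
proof -
  show "is_iso K f" unfolding is_iso_def using f g gf fg homD[OF f] by auto
  then show "isomorphic K X Y" unfolding isomorphic_def using f by auto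
qed

lemma isoD: assumes "isomorphic K X Y"
  obtains f g where "f \<in> hom K X Y" "g \<in> hom K Y X" "cComp K g f = cId K X" "cComp K f g = cId K Y"
  using assms unfolding isomorphic_def is_iso_def hom_def by auto

lemma iso_hom_D: assumes "f \<in> hom K X Y" "is_iso K f"
  obtains g where "g \<in> hom K Y X" "cComp K g f = cId K X" "cComp K f g = cId K Y"
  using assms unfolding is_iso_def hom_def by auto

lemma iso_refl: "X \<in> cOb K \<Longrightarrow> isomorphic K X X"
  using mk_iso(2)[of "cId K X" X X "cId K X"] comp_id_l[OF id_hom] by auto

lemma iso_sym: "isomorphic K X Y \<Longrightarrow> isomorphic K Y X"
  by (metis isoD mk_iso(2))

lemma iso_trans: assumes "isomorphic K X Y" "isomorphic K Y Z" shows "isomorphic K X Z"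
proof -
  obtain f g where f: "f \<in> hom K X Y" "g \<in> hom K Y X" "cComp K g f = cId K X" "cComp K f g = cId K Y"
    using assms(1) isoD by blast
  obtain f' g' where f': "f' \<in> hom K Y Z" "g' \<in> hom K Z Y" "cComp K g' f' = cId K Y" "cComp K f' g' = cId K Z"
    using assms(2) isoD by blast
  have X: "X \<in> cOb K" and Z: "Z \<in> cOb K" using f f' hom_ob by auto
  have "cComp K (cComp K g g') (cComp K f' f) = cComp K g (cComp K g' (cComp K f' f))"
    using assoc[OF comp_hom[OF f(1) f'(1)] f'(2) f(2)] by simp
  also have "\<dots> = cComp K g (cComp K (cComp K g' f') f)" using assoc[OF f(1) f'(1) f'(2)] by simp
  also have "\<dots> = cId K X" using f f' comp_id_l by metis
  finally have 1: "cComp K (cComp K g g') (cComp K f' f) = cId K X" .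
  have "cComp K (cComp K f' f) (cComp K g g') = cComp K f' (cComp K f (cComp K g g'))"
    using assoc[OF comp_hom[OF f'(2) f(2)] f(1) f'(1)] by simp
  also have "\<dots> = cComp K f' (cComp K (cComp K f g) g')" using assoc[OF f'(2) f(2) f(1)] by simp
  also have "\<dots> = cId K Z" using f f' comp_id_l by metis
  finally have 2: "cComp K (cComp K f' f) (cComp K g g') = cId K Z" .
  show ?thesis using mk_iso(2)[OF comp_hom[OF f(1) f'(1)] comp_hom[OF f'(2) f(2)] 1 2] .
qed

lemma biprod_iso:
  assumes i1: "i1 \<in> hom K X W" and i2: "i2 \<in> hom K X' W"
    and p1: "p1 \<in> hom K W X" and p2: "p2 \<in> hom K W X'"
    and e1: "cComp K p1 i1 = cId K X" and e2: "cComp K p2 i2 = cId K X'"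
    and e3: "cComp K p2 i1 = cZero K X X'" and e4: "cComp K p1 i2 = cZero K X' X"
    and e5: "cPlus K (cComp K i1 p1) (cComp K i2 p2) = cId K W"
  shows "isomorphic K W (cSum K X X')"
proof -
  have X: "X \<in> cOb K" and X': "X' \<in> cOb K" and W: "W \<in> cOb K" using i1 i2 hom_ob by auto
  define S where "S = cSum K X X'"
  note sf = sum_facts[OF X X', folded S_def]
  have in1: "cIn1 K X X' \<in> hom K X S" and in2: "cIn2 K X X' \<in> hom K X' S"
    and pr1: "cPr1 K X X' \<in> hom K S X" and pr2: "cPr2 K X X' \<in> hom K S X'" using sf by auto
  define \<phi> where "\<phi> = cPlus K (cComp K (cIn1 K X X') p1) (cComp K (cIn2 K X X') p2)"
  define \<psi> where "\<psi> = cPlus K (cComp K i1 (cPr1 K X X')) (cComp K i2 (cPr2 K X X'))"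
  have a1: "cComp K (cIn1 K X X') p1 \<in> hom K W S" using comp_hom p1 in1 by auto
  have a2: "cComp K (cIn2 K X X') p2 \<in> hom K W S" using comp_hom p2 in2 by auto
  have b1: "cComp K i1 (cPr1 K X X') \<in> hom K S W" using comp_hom i1 pr1 by auto
  have b2: "cComp K i2 (cPr2 K X X') \<in> hom K S W" using comp_hom i2 pr2 by auto
  have ph: "\<phi> \<in> hom K W S" unfolding \<phi>_def using plus_hom a1 a2 by auto
  have ps: "\<psi> \<in> hom K S W" unfolding \<psi>_def using plus_hom b1 b2 by auto
  have psi1: "cComp K \<psi> (cIn1 K X X') = i1"
  proof -
    have "cComp K \<psi> (cIn1 K X X') = cPlus K (cComp K (cComp K i1 (cPr1 K X X')) (cIn1 K X X'))
             (cComp K (cComp K i2 (cPr2 K X X')) (cIn1 K X X'))"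
      unfolding \<psi>_def using distr in1 b1 b2 by blast
    also have "\<dots> = cPlus K (cComp K i1 (cComp K (cPr1 K X X') (cIn1 K X X')))
             (cComp K i2 (cComp K (cPr2 K X X') (cIn1 K X X')))"
      using assoc[OF in1 pr1 i1] assoc[OF in1 pr2 i2] by simp
    also have "\<dots> = cPlus K i1 (cZero K X W)" using sf comp_id_r i1 comp_zero_r i2 X by auto
    also have "\<dots> = i1" using plus_zero i1 by auto
    finally show ?thesis .
  qed
  have psi2: "cComp K \<psi> (cIn2 K X X') = i2"
  proof -
    have "cComp K \<psi> (cIn2 K X X') = cPlus K (cComp K (cComp K i1 (cPr1 K X X')) (cIn2 K X X'))
             (cComp K (cComp K i2 (cPr2 K X X')) (cIn2 K X X'))"
      unfolding \<psi>_def using distr in2 b1 b2 by blast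
    also have "\<dots> = cPlus K (cComp K i1 (cComp K (cPr1 K X X') (cIn2 K X X')))
             (cComp K i2 (cComp K (cPr2 K X X') (cIn2 K X X')))"
      using assoc[OF in2 pr1 i1] assoc[OF in2 pr2 i2] by simp
    also have "\<dots> = cPlus K (cZero K X' W) i2" using sf comp_id_r i2 comp_zero_r i1 X' by auto
    also have "\<dots> = i2" using zero_plus i2 by auto
    finally show ?thesis .
  qed
  have phi1: "cComp K \<phi> i1 = cIn1 K X X'"
  proof -
    have "cComp K \<phi> i1 = cPlus K (cComp K (cComp K (cIn1 K X X') p1) i1)
             (cComp K (cComp K (cIn2 K X X') p2) i1)"
      unfolding \<phi>_def using distr i1 a1 a2 by blast
    also have "\<dots> = cPlus K (cComp K (cIn1 K X X') (cComp K p1 i1))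
             (cComp K (cIn2 K X X') (cComp K p2 i1))"
      using assoc[OF i1 p1 in1] assoc[OF i1 p2 in2] by simp
    also have "\<dots> = cPlus K (cIn1 K X X') (cZero K X S)" using e1 e3 comp_id_r in1 comp_zero_r in2 X by auto
    also have "\<dots> = cIn1 K X X'" using plus_zero in1 by auto
    finally show ?thesis .
  qed
  have phi2: "cComp K \<phi> i2 = cIn2 K X X'"
  proof -
    have "cComp K \<phi> i2 = cPlus K (cComp K (cComp K (cIn1 K X X') p1) i2)
             (cComp K (cComp K (cIn2 K X X') p2) i2)"
      unfolding \<phi>_def using distr i2 a1 a2 by blast
    also have "\<dots> = cPlus K (cComp K (cIn1 K X X') (cComp K p1 i2))
             (cComp K (cIn2 K X X') (cComp K p2 i2))"
      using assoc[OF i2 p1 in1] assoc[OF i2 p2 in2] by simp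
    also have "\<dots> = cPlus K (cZero K X' S) (cIn2 K X X')" using e2 e4 comp_id_r in2 comp_zero_r in1 X' by auto
    also have "\<dots> = cIn2 K X X'" using zero_plus in2 by auto
    finally show ?thesis .
  qed
  have c1: "cComp K \<psi> \<phi> = cId K W"
  proof -
    have "cComp K \<psi> \<phi> = cPlus K (cComp K \<psi> (cComp K (cIn1 K X X') p1)) (cComp K \<psi> (cComp K (cIn2 K X X') p2))"
      unfolding \<phi>_def using distl a1 a2 ps by blast
    also have "\<dots> = cPlus K (cComp K (cComp K \<psi> (cIn1 K X X')) p1) (cComp K (cComp K \<psi> (cIn2 K X X')) p2)"
      using assoc[OF p1 in1 ps] assoc[OF p2 in2 ps] by simp
    also have "\<dots> = cId K W" using psi1 psi2 e5 by simp
    finally show ?thesis .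
  qed
  have c2: "cComp K \<phi> \<psi> = cId K S"
  proof -
    have "cComp K \<phi> \<psi> = cPlus K (cComp K \<phi> (cComp K i1 (cPr1 K X X'))) (cComp K \<phi> (cComp K i2 (cPr2 K X X')))"
      unfolding \<psi>_def using distl b1 b2 ph by blast
    also have "\<dots> = cPlus K (cComp K (cComp K \<phi> i1) (cPr1 K X X')) (cComp K (cComp K \<phi> i2) (cPr2 K X X'))"
      using assoc[OF pr1 i1 ph] assoc[OF pr2 i2 ph] by simp
    also have "\<dots> = cId K S" using phi1 phi2 sf by simp
    finally show ?thesis .
  qed
  show ?thesis using mk_iso(2)[OF ph ps c1 c2] unfolding S_def .
qed

lemma iso_sum0: assumes X: "X \<in> cOb K" shows "isomorphic K X (cSum K X (cZobj K))"
proof -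
  have z1: "cZero K (cZobj K) X \<in> hom K (cZobj K) X" and z2: "cZero K X (cZobj K) \<in> hom K X (cZobj K)"
    using zero_hom X zobj by auto
  show ?thesis
  proof (rule biprod_iso[OF id_hom[OF X] z1 id_hom[OF X] z2])
    show "cComp K (cId K X) (cId K X) = cId K X" using comp_id_l id_hom X by blast
    show "cComp K (cZero K X (cZobj K)) (cZero K (cZobj K) X) = cId K (cZobj K)"
      using to0_eq[OF comp_hom[OF z1 z2]] id0 by auto
    show "cComp K (cZero K X (cZobj K)) (cId K X) = cZero K X (cZobj K)" using comp_id_r z2 by blast
    show "cComp K (cId K X) (cZero K (cZobj K) X) = cZero K (cZobj K) X" using comp_id_l z1 by blast
    have "cComp K (cZero K (cZobj K) X) (cZero K X (cZobj K)) = cZero K X X" using through0 z1 z2 by auto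
    then show "cPlus K (cComp K (cId K X) (cId K X)) (cComp K (cZero K (cZobj K) X) (cZero K X (cZobj K))) = cId K X"
      using comp_id_l id_hom X plus_zero by metis
  qed
qed

lemma iso_swap: assumes X: "X \<in> cOb K" and Y: "Y \<in> cOb K"
  shows "isomorphic K (cSum K X Y) (cSum K Y X)"
proof -
  note sf = sum_facts[OF X Y]
  show ?thesis
    apply (rule biprod_iso[of "cIn2 K X Y" Y _ "cIn1 K X Y" X "cPr2 K X Y" "cPr1 K X Y"])
    using sf apply blast+
    using sf plus_comm[OF comp_hom[of "cPr1 K X Y" _ X "cIn1 K X Y"] comp_hom[of "cPr2 K X Y" _ Y "cIn2 K X Y"]]
    by metis
qed

lemma thickD1: "thick_ideal K I \<Longrightarrow> I \<subseteq> cOb K" by (simp add: thick_ideal_def)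
lemma thickD2: "thick_ideal K I \<Longrightarrow> cZobj K \<in> I" by (simp add: thick_ideal_def)
lemma thickD3: "thick_ideal K I \<Longrightarrow> X \<in> cOb K \<Longrightarrow> cShift K X \<in> I \<longleftrightarrow> X \<in> I" by (simp add: thick_ideal_def)
lemma thickD_tri: "thick_ideal K I \<Longrightarrow> (u, v, w) \<in> cDist K \<Longrightarrow>
   (cDom K u \<in> I \<longrightarrow> cDom K v \<in> I \<longrightarrow> cDom K w \<in> I) \<and> (cDom K v \<in> I \<longrightarrow> cDom K w \<in> I \<longrightarrow> cDom K u \<in> I) \<and>
   (cDom K w \<in> I \<longrightarrow> cDom K u \<in> I \<longrightarrow> cDom K v \<in> I)"
  unfolding thick_ideal_def Let_def by blast
lemma thickD7: "thick_ideal K I \<Longrightarrow> X \<in> cOb K \<Longrightarrow> X' \<in> cOb K \<Longrightarrow> Y \<in> I \<Longrightarrow> isomorphic K Y (cSum K X X') \<Longrightarrow> X \<in> I"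
  unfolding thick_ideal_def by blast
lemma thickD8: "thick_ideal K I \<Longrightarrow> A \<in> I \<Longrightarrow> B \<in> cOb K \<Longrightarrow> cTen K A B \<in> I"
  unfolding thick_ideal_def by blast
lemma thickD9: "thick_ideal K I \<Longrightarrow> A \<in> I \<Longrightarrow> B \<in> cOb K \<Longrightarrow> cTen K B A \<in> I"
  unfolding thick_ideal_def by blast

lemma thickI:
  assumes "I \<subseteq> cOb K" "cZobj K \<in> I" "\<And>X. X \<in> cOb K \<Longrightarrow> cShift K X \<in> I \<longleftrightarrow> X \<in> I"
    "\<And>u v w. (u, v, w) \<in> cDist K \<Longrightarrow> (cDom K u \<in> I \<longrightarrow> cDom K v \<in> I \<longrightarrow> cDom K w \<in> I) \<and> (cDom K v \<in> I \<longrightarrow> cDom K w \<in> I \<longrightarrow> cDom K u \<in> I) \<and>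
   (cDom K w \<in> I \<longrightarrow> cDom K u \<in> I \<longrightarrow> cDom K v \<in> I)"
    "\<And>X X' Y. X \<in> cOb K \<Longrightarrow> X' \<in> cOb K \<Longrightarrow> Y \<in> I \<Longrightarrow> isomorphic K Y (cSum K X X') \<Longrightarrow> X \<in> I"
    "\<And>A B. A \<in> I \<Longrightarrow> B \<in> cOb K \<Longrightarrow> cTen K A B \<in> I \<and> cTen K B A \<in> I"
  shows "thick_ideal K I"
  unfolding thick_ideal_def Let_def using assms by blast

lemma thick_iso: "thick_ideal K I \<Longrightarrow> Y \<in> I \<Longrightarrow> X \<in> cOb K \<Longrightarrow> isomorphic K Y X \<Longrightarrow> X \<in> I"
  using iso_sum0 iso_trans thickD7 zobj by meson

lemma thick_summand2: "thick_ideal K I \<Longrightarrow> X \<in> cOb K \<Longrightarrow> Y \<in> cOb K \<Longrightarrow> cSum K X Y \<in> I \<Longrightarrow> Y \<in> I"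
  using iso_swap thickD7 by meson
lemma thick_summand1: "thick_ideal K I \<Longrightarrow> X \<in> cOb K \<Longrightarrow> Y \<in> cOb K \<Longrightarrow> cSum K X Y \<in> I \<Longrightarrow> X \<in> I"
  using iso_refl sum_facts thickD7 by meson

end

context mdcK begin

lemma tri_p1: "\<forall>T \<in> cDist K. is_triangle K T"
  using tri unfolding is_triangulated_def by (elim conjE) assumption
lemma tri_p2: "\<forall>T \<in> cDist K. \<forall>T'. is_triangle K T' \<and>
        (\<exists>a b c. tri_morph K T T' a b c \<and> is_iso K a \<and> is_iso K b \<and> is_iso K c) \<longrightarrow> T' \<in> cDist K"
  using tri unfolding is_triangulated_def by (elim conjE) assumption
lemma tri_p3: "\<forall>X \<in> cOb K. (cId K X, cZero K X (cZobj K), cZero K (cZobj K) (cShift K X)) \<in> cDist K"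
  using tri unfolding is_triangulated_def by (elim conjE) assumption
lemma tri_p4: "\<forall>u \<in> cAr K. \<exists>v w. (u, v, w) \<in> cDist K"
  using tri unfolding is_triangulated_def by (elim conjE) assumption
lemma tri_p5: "\<forall>u v w. is_triangle K (u, v, w) \<longrightarrow>
        ((u, v, w) \<in> cDist K \<longleftrightarrow> (v, w, cNeg K (cShiftM K u)) \<in> cDist K)"
  using tri unfolding is_triangulated_def by (elim conjE) assumption
lemma tri_p6: "\<forall>u v w u' v' w' a b. (u, v, w) \<in> cDist K \<longrightarrow> (u', v', w') \<in> cDist K \<longrightarrow>
        a \<in> hom K (cDom K u) (cDom K u') \<longrightarrow> b \<in> hom K (cDom K v) (cDom K v') \<longrightarrow>
        cComp K u' a = cComp K b u \<longrightarrow>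
        (\<exists>c. tri_morph K (u, v, w) (u', v', w') a b c)"
  using tri unfolding is_triangulated_def by (elim conjE) assumption

lemma dist_tri: "(u,v,w) \<in> cDist K \<Longrightarrow> is_triangle K (u,v,w)"
  using tri_p1 by blast

lemma dist_hom: assumes "(u,v,w) \<in> cDist K"
  shows "u \<in> hom K (cDom K u) (cDom K v)" "v \<in> hom K (cDom K v) (cDom K w)"
        "w \<in> hom K (cDom K w) (cShift K (cDom K u))"
  using dist_tri[OF assms] unfolding is_triangle_def hom_def by auto

lemma shift_ob: "X \<in> cOb K \<Longrightarrow> cShift K X \<in> cOb K"
  using shf unfolding shift_equivalence_def by auto

lemma ten_ob: "A \<in> cOb K \<Longrightarrow> B \<in> cOb K \<Longrightarrow> cTen K A B \<in> cOb K"
  using mon unfolding is_monoidal_def by auto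

lemma unit_ob: "cUnit K \<in> cOb K"
  using mon unfolding is_monoidal_def by auto

lemma thick_Ob: "thick_ideal K (cOb K)"
proof (rule thickI)
  fix u v w assume d: "(u,v,w) \<in> cDist K"
  show "(cDom K u \<in> cOb K \<longrightarrow> cDom K v \<in> cOb K \<longrightarrow> cDom K w \<in> cOb K) \<and>
       (cDom K v \<in> cOb K \<longrightarrow> cDom K w \<in> cOb K \<longrightarrow> cDom K u \<in> cOb K) \<and>
       (cDom K w \<in> cOb K \<longrightarrow> cDom K u \<in> cOb K \<longrightarrow> cDom K v \<in> cOb K)"
    using dist_hom[OF d] hom_ob by blast
qed (simp_all add: zobj shift_ob ten_ob)

lemma thick_Inter: assumes ne: "F \<noteq> {}" and th: "\<And>I. I \<in> F \<Longrightarrow> thick_ideal K I"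
  shows "thick_ideal K (\<Inter>F)"
proof (rule thickI)
  show "\<Inter> F \<subseteq> cOb K" using ne th thickD1 by blast
  show "cZobj K \<in> \<Inter> F" using th thickD2 by blast
  show "\<And>X. X \<in> cOb K \<Longrightarrow> (cShift K X \<in> \<Inter> F) = (X \<in> \<Inter> F)" using th thickD3 by blast
  fix u v w assume "(u, v, w) \<in> cDist K"
  show "(cDom K u \<in> \<Inter> F \<longrightarrow> cDom K v \<in> \<Inter> F \<longrightarrow> cDom K w \<in> \<Inter> F) \<and>
           (cDom K v \<in> \<Inter> F \<longrightarrow> cDom K w \<in> \<Inter> F \<longrightarrow> cDom K u \<in> \<Inter> F) \<and>
           (cDom K w \<in> \<Inter> F \<longrightarrow> cDom K u \<in> \<Inter> F \<longrightarrow> cDom K v \<in> \<Inter> F)"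
  proof (intro conjI impI InterI)
    fix I assume a: "cDom K u \<in> \<Inter> F" "cDom K v \<in> \<Inter> F" "I \<in> F"
    then show "cDom K w \<in> I" using thickD_tri[OF th[OF a(3)] \<open>(u,v,w) \<in> cDist K\<close>] by blast
  next
    fix I assume a: "cDom K v \<in> \<Inter> F" "cDom K w \<in> \<Inter> F" "I \<in> F"
    then show "cDom K u \<in> I" using thickD_tri[OF th[OF a(3)] \<open>(u,v,w) \<in> cDist K\<close>] by blast
  next
    fix I assume a: "cDom K w \<in> \<Inter> F" "cDom K u \<in> \<Inter> F" "I \<in> F"
    then show "cDom K v \<in> I" using thickD_tri[OF th[OF a(3)] \<open>(u,v,w) \<in> cDist K\<close>] by blast
  qed
next
  show "\<And>X X' Y. X \<in> cOb K \<Longrightarrow> X' \<in> cOb K \<Longrightarrow> Y \<in> \<Inter> F \<Longrightarrow> isomorphic K Y (cSum K X X') \<Longrightarrow> X \<in> \<Inter> F"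
    using th thickD7 by blast
  show "\<And>A B. A \<in> \<Inter> F \<Longrightarrow> B \<in> cOb K \<Longrightarrow> cTen K A B \<in> \<Inter> F \<and> cTen K B A \<in> \<Inter> F"
    using th thickD8 thickD9 by blast
qed

lemma thick_Union: assumes ne: "F \<noteq> {}" and th: "\<And>I. I \<in> F \<Longrightarrow> thick_ideal K I"
  and dir: "\<And>I J. I \<in> F \<Longrightarrow> J \<in> F \<Longrightarrow> \<exists>L \<in> F. I \<subseteq> L \<and> J \<subseteq> L"
  shows "thick_ideal K (\<Union>F)"
proof (rule thickI)
  show "\<Union> F \<subseteq> cOb K" using th thickD1 by blast
  obtain I0 where "I0 \<in> F" using ne by blast
  then show "cZobj K \<in> \<Union> F" using th thickD2 by blast
  show "(cShift K X \<in> \<Union> F) = (X \<in> \<Union> F)" if X: "X \<in> cOb K" for X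
  proof
    assume "cShift K X \<in> \<Union> F"
    then obtain I where "I \<in> F" "cShift K X \<in> I" by blast
    then show "X \<in> \<Union> F" using thickD3[OF th X] by blast
  next
    assume "X \<in> \<Union> F"
    then obtain I where I: "I \<in> F" "X \<in> I" by blast
    then have "cShift K X \<in> I" using thickD3[OF th[OF I(1)] X] by simp
    then show "cShift K X \<in> \<Union> F" using I by blast
  qed
  fix u v w assume d: "(u, v, w) \<in> cDist K"
  have 2: "\<And>a b. a \<in> \<Union>F \<Longrightarrow> b \<in> \<Union>F \<Longrightarrow> \<exists>L\<in>F. a \<in> L \<and> b \<in> L"
  proof -
    fix a b assume "a \<in> \<Union>F" "b \<in> \<Union>F"
    then obtain I J where IJ: "I \<in> F" "J \<in> F" "a \<in> I" "b \<in> J" by blast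
    obtain L where "L \<in> F" "I \<subseteq> L" "J \<subseteq> L" using dir[OF IJ(1,2)] by blast
    then show "\<exists>L\<in>F. a \<in> L \<and> b \<in> L" using IJ by blast
  qed
  show "(cDom K u \<in> \<Union> F \<longrightarrow> cDom K v \<in> \<Union> F \<longrightarrow> cDom K w \<in> \<Union> F) \<and>
           (cDom K v \<in> \<Union> F \<longrightarrow> cDom K w \<in> \<Union> F \<longrightarrow> cDom K u \<in> \<Union> F) \<and>
           (cDom K w \<in> \<Union> F \<longrightarrow> cDom K u \<in> \<Union> F \<longrightarrow> cDom K v \<in> \<Union> F)"
  proof (intro conjI impI)
    assume "cDom K u \<in> \<Union> F" "cDom K v \<in> \<Union> F"
    then obtain L where L: "L \<in> F" "cDom K u \<in> L" "cDom K v \<in> L" using 2 by blast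
    then show "cDom K w \<in> \<Union> F" using thickD_tri[OF th[OF L(1)] d] by blast
  next
    assume "cDom K v \<in> \<Union> F" "cDom K w \<in> \<Union> F"
    then obtain L where L: "L \<in> F" "cDom K v \<in> L" "cDom K w \<in> L" using 2 by blast
    then show "cDom K u \<in> \<Union> F" using thickD_tri[OF th[OF L(1)] d] by blast
  next
    assume "cDom K w \<in> \<Union> F" "cDom K u \<in> \<Union> F"
    then obtain L where L: "L \<in> F" "cDom K w \<in> L" "cDom K u \<in> L" using 2 by blast
    then show "cDom K v \<in> \<Union> F" using thickD_tri[OF th[OF L(1)] d] by blast
  qed
next
  show "X \<in> \<Union> F" if a: "X \<in> cOb K" "X' \<in> cOb K" "Y \<in> \<Union> F" "isomorphic K Y (cSum K X X')" for X X' Y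
  proof -
    obtain I where I: "I \<in> F" "Y \<in> I" using a by blast
    then show ?thesis using thickD7[OF th[OF I(1)] a(1,2) I(2) a(4)] by blast
  qed
  show "cTen K A B \<in> \<Union> F \<and> cTen K B A \<in> \<Union> F" if a: "A \<in> \<Union> F" "B \<in> cOb K" for A B
  proof -
    obtain I where I: "I \<in> F" "A \<in> I" using a by blast
    then show ?thesis using thickD8[OF th[OF I(1)] I(2) a(2)] thickD9[OF th[OF I(1)] I(2) a(2)] by blast
  qed
qed

lemma gen_thick: "S \<subseteq> cOb K \<Longrightarrow> thick_ideal K (gen_ideal K S)"
  unfolding gen_ideal_def by (rule thick_Inter) (use thick_Ob in auto)

lemma gen_sub: "S \<subseteq> gen_ideal K S"
  unfolding gen_ideal_def by auto

lemma gen_least: "thick_ideal K I \<Longrightarrow> S \<subseteq> I \<Longrightarrow> gen_ideal K S \<subseteq> I"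
  unfolding gen_ideal_def by auto

lemma gen_Ob: "S \<subseteq> cOb K \<Longrightarrow> gen_ideal K S \<subseteq> cOb K"
  using gen_least thick_Ob by blast

lemma unit_all: assumes I: "thick_ideal K I" and u: "cUnit K \<in> I" shows "I = cOb K"
proof
  show "I \<subseteq> cOb K" using thickD1[OF I] .
  show "cOb K \<subseteq> I"
  proof
    fix B assume B: "B \<in> cOb K"
    have t: "cTen K (cUnit K) B \<in> I" using thickD8[OF I u B] .
    have "cLunit K B \<in> hom K (cTen K (cUnit K) B) B \<and> is_iso K (cLunit K B)"
      using mon B unfolding is_monoidal_def by blast
    then have "isomorphic K (cTen K (cUnit K) B) B" unfolding isomorphic_def by blast
    then show "B \<in> I" using thick_iso[OF I t B] by blast
  qed
qed

lemma proper_unit: "thick_ideal K I \<Longrightarrow> proper_ideal K I \<longleftrightarrow> cUnit K \<notin> I"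
  unfolding proper_ideal_def using unit_all unit_ob by blast

lemma exists_max: assumes P: "proper_ideal K I" shows "\<exists>M. maximal_ideal K M \<and> I \<subseteq> M"
proof -
  define A where "A = {J. proper_ideal K J \<and> I \<subseteq> J}"
  have "\<forall>C\<in>chains A. \<exists>U\<in>A. \<forall>X\<in>C. X \<subseteq> U"
  proof
    fix C assume C: "C \<in> chains A"
    show "\<exists>U\<in>A. \<forall>X\<in>C. X \<subseteq> U"
    proof (cases "C = {}")
      case True then show ?thesis using P unfolding A_def by auto
    next
      case False
      have CA: "C \<subseteq> A" using C unfolding chains_def by auto
      have ch: "\<And>X Y. X \<in> C \<Longrightarrow> Y \<in> C \<Longrightarrow> X \<subseteq> Y \<or> Y \<subseteq> X"
        using C unfolding chains_def chain_subset_def by auto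
      have th: "\<And>J. J \<in> C \<Longrightarrow> thick_ideal K J" using CA unfolding A_def proper_ideal_def by auto
      have T: "thick_ideal K (\<Union>C)"
      proof (rule thick_Union[OF False th])
        fix I J assume "I \<in> C" "J \<in> C"
        then show "\<exists>L\<in>C. I \<subseteq> L \<and> J \<subseteq> L" using ch[of I J] by blast
      qed
      have "cUnit K \<notin> \<Union>C" using CA th proper_unit unfolding A_def by blast
      then have "proper_ideal K (\<Union>C)" using proper_unit T by blast
      moreover have "I \<subseteq> \<Union>C" using False CA unfolding A_def by blast
      ultimately show ?thesis unfolding A_def by blast
    qed
  qed
  from Zorn_Lemma2[OF this] obtain M where M: "M \<in> A" "\<forall>X\<in>A. M \<subseteq> X \<longrightarrow> X = M" by blast
  have "maximal_ideal K M" unfolding maximal_ideal_def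
  proof (intro conjI allI impI)
    show "proper_ideal K M" using M unfolding A_def by auto
    fix J assume "proper_ideal K J" "M \<subseteq> J"
    then show "J = M" using M unfolding A_def by auto
  qed
  then show ?thesis using M unfolding A_def by auto
qed

end

context mdcK begin

lemma hom_dom: "f \<in> hom K X Y \<Longrightarrow> cDom K f = X" by (simp add: hom_def)
lemma hom_cod: "f \<in> hom K X Y \<Longrightarrow> cCod K f = Y" by (simp add: hom_def)
lemma hom_ar: "f \<in> hom K X Y \<Longrightarrow> f \<in> cAr K" by (simp add: hom_def)

lemma shiftM_hom: "f \<in> hom K X Y \<Longrightarrow> cShiftM K f \<in> hom K (cShift K X) (cShift K Y)"
  using shf unfolding shift_equivalence_def hom_def by auto
lemma shift_id: "X \<in> cOb K \<Longrightarrow> cShiftM K (cId K X) = cId K (cShift K X)"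
  using shf unfolding shift_equivalence_def by auto
lemma shift_comp: "f \<in> hom K X Y \<Longrightarrow> g \<in> hom K Y Z \<Longrightarrow>
   cShiftM K (cComp K g f) = cComp K (cShiftM K g) (cShiftM K f)"
  using shf unfolding shift_equivalence_def hom_def by auto
lemma shift_plus: "f \<in> hom K X Y \<Longrightarrow> g \<in> hom K X Y \<Longrightarrow>
   cShiftM K (cPlus K f g) = cPlus K (cShiftM K f) (cShiftM K g)"
proof -
  assume a: "f \<in> hom K X Y" "g \<in> hom K X Y"
  then have "X \<in> cOb K" "Y \<in> cOb K" using hom_ob by auto
  with a shf show ?thesis unfolding shift_equivalence_def by blast
qed

lemma shift_zero: assumes X: "X \<in> cOb K" and Y: "Y \<in> cOb K"
  shows "cShiftM K (cZero K X Y) = cZero K (cShift K X) (cShift K Y)"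
proof -
  have z: "cZero K X Y \<in> hom K X Y" using zero_hom X Y by auto
  have "cPlus K (cShiftM K (cZero K X Y)) (cShiftM K (cZero K X Y)) = cShiftM K (cZero K X Y)"
    using shift_plus[OF z z] plus_zero[OF z] by simp
  then show ?thesis using idem_zero shiftM_hom[OF z] by blast
qed

lemma neg_zero: assumes X: "X \<in> cOb K" and Y: "Y \<in> cOb K"
  shows "cNeg K (cZero K X Y) = cZero K X Y"
proof -
  have z: "cZero K X Y \<in> hom K X Y" using zero_hom X Y by auto
  have n: "cNeg K (cZero K X Y) \<in> hom K X Y" using neg_hom z by auto
  have "cZero K X Y = cPlus K (cZero K X Y) (cNeg K (cZero K X Y))" using plus_neg z by simp
  also have "\<dots> = cNeg K (cZero K X Y)" using zero_plus n by simp
  finally show ?thesis by simp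
qed

lemma base_dist: "X \<in> cOb K \<Longrightarrow> (cId K X, cZero K X (cZobj K), cZero K (cZobj K) (cShift K X)) \<in> cDist K"
  using tri_p3 by blast

lemma rot: assumes d: "(u,v,w) \<in> cDist K" shows "(v, w, cNeg K (cShiftM K u)) \<in> cDist K"
  using tri_p5 dist_tri[OF d] d by blast

lemma L1: assumes d: "(u,v,w) \<in> cDist K"
  shows "cComp K v u = cZero K (cDom K u) (cDom K w)"
proof -
  define X where "X = cDom K u"
  have u: "u \<in> hom K X (cDom K v)" and v: "v \<in> hom K (cDom K v) (cDom K w)"
    using dist_hom[OF d] unfolding X_def by auto
  have X: "X \<in> cOb K" using hom_ob u by auto
  have B: "(cId K X, cZero K X (cZobj K), cZero K (cZobj K) (cShift K X)) \<in> cDist K"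
    using base_dist X by auto
  have dI: "cDom K (cId K X) = X" using hom_dom id_hom X by blast
  have dz: "cDom K (cZero K X (cZobj K)) = X" using hom_dom zero_hom X zobj by blast
  have dz2: "cDom K (cZero K (cZobj K) (cShift K X)) = cZobj K" using hom_dom zero_hom shift_ob X zobj by blast
  have "\<exists>c. tri_morph K (cId K X, cZero K X (cZobj K), cZero K (cZobj K) (cShift K X)) (u, v, w) (cId K X) u c"
    using tri_p6 B d dI dz id_hom[OF X] u unfolding X_def by (metis (no_types, lifting))
  then obtain c where c: "c \<in> hom K (cZobj K) (cDom K w)" "cComp K v u = cComp K c (cZero K X (cZobj K))"
    unfolding tri_morph_def using dI dz dz2 by auto
  have "cComp K c (cZero K X (cZobj K)) = cZero K X (cDom K w)" using comp_zero_r[OF c(1) X] .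
  then show ?thesis using c(2) unfolding X_def by simp
qed

lemma T2_dist: assumes W: "W \<in> cOb K"
  shows "(cZero K (cZobj K) W, cId K W, cZero K W (cShift K (cZobj K))) \<in> cDist K"
proof -
  define Z where "Z = cZobj K"
  have Z: "Z \<in> cOb K" using zobj Z_def by simp
  have SZ: "cShift K Z \<in> cOb K" using shift_ob Z by auto
  have SW: "cShift K W \<in> cOb K" using shift_ob W by auto
  have B: "(cId K W, cZero K W Z, cZero K Z (cShift K W)) \<in> cDist K" using base_dist W Z_def by auto
  define c where "c = cZero K Z (cShift K Z)"
  define d where "d = cZero K (cShift K Z) Z"
  have ch: "c \<in> hom K Z (cShift K Z)" using zero_hom Z SZ c_def by auto
  have dh: "d \<in> hom K (cShift K Z) Z" using zero_hom Z SZ d_def by auto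
  have dc: "cComp K d c = cId K Z" using comp_zero_r[OF dh Z] id0 Z_def c_def by simp
  have cd: "cComp K c d = cId K (cShift K Z)"
  proof -
    have "cComp K c d = cZero K (cShift K Z) (cShift K Z)" using comp_zero_r[OF ch SZ] d_def by simp
    also have "\<dots> = cShiftM K (cZero K Z Z)" using shift_zero Z by simp
    also have "\<dots> = cId K (cShift K Z)" using id0 shift_id[OF Z] Z_def by simp
    finally show ?thesis .
  qed
  have ci: "is_iso K c" using mk_iso(1)[OF ch dh dc cd] .
  have ii: "is_iso K (cId K W)" using mk_iso(1)[OF id_hom[OF W] id_hom[OF W]] comp_id_l id_hom W by blast
  have iW: "cId K W \<in> hom K W W" using W by simp
  have z1: "cZero K W (cShift K Z) \<in> hom K W (cShift K Z)" using zero_hom W SZ by auto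
  have z2: "cZero K (cShift K Z) (cShift K W) \<in> hom K (cShift K Z) (cShift K W)" using zero_hom SW SZ by auto
  have z3: "cZero K W Z \<in> hom K W Z" using zero_hom W Z by auto
  have z4: "cZero K Z (cShift K W) \<in> hom K Z (cShift K W)" using zero_hom SW Z by auto
  have T'tri: "is_triangle K (cId K W, cZero K W (cShift K Z), cZero K (cShift K Z) (cShift K W))"
    unfolding is_triangle_def using iW z1 z2 by (simp add: hom_def)
  have tm: "tri_morph K (cId K W, cZero K W Z, cZero K Z (cShift K W))
      (cId K W, cZero K W (cShift K Z), cZero K (cShift K Z) (cShift K W)) (cId K W) (cId K W) c"
    unfolding tri_morph_def
  proof (simp only: prod.case, intro conjI)
    show "cId K W \<in> hom K (cDom K (cId K W)) (cDom K (cId K W))" using iW hom_dom by metis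
    show "cId K W \<in> hom K (cDom K (cZero K W Z)) (cDom K (cZero K W (cShift K Z)))"
      using iW hom_dom z1 z3 by metis
    show "c \<in> hom K (cDom K (cZero K Z (cShift K W))) (cDom K (cZero K (cShift K Z) (cShift K W)))"
      using ch hom_dom z2 z4 by metis
    show "cComp K (cId K W) (cId K W) = cComp K (cId K W) (cId K W)" by simp
    show "cComp K (cZero K W (cShift K Z)) (cId K W) = cComp K c (cZero K W Z)"
      using comp_id_r[OF z1] comp_zero_r[OF ch W] by simp
    show "cComp K (cZero K (cShift K Z) (cShift K W)) c = cComp K (cShiftM K (cId K W)) (cZero K Z (cShift K W))"
      using comp_zero_r[OF z2 Z] c_def shift_id[OF W] comp_id_l[OF z4] by simp
  qed
  have rd: "(cId K W, cZero K W (cShift K Z), cZero K (cShift K Z) (cShift K W)) \<in> cDist K"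
    using tri_p2 B T'tri tm iW ii ci by blast
  have zz: "cNeg K (cShiftM K (cZero K Z W)) = cZero K (cShift K Z) (cShift K W)"
    using shift_zero[OF Z W] neg_zero[OF SZ SW] by simp
  have zh: "cZero K Z W \<in> hom K Z W" using zero_hom Z W by auto
  have Ttri: "is_triangle K (cZero K Z W, cId K W, cZero K W (cShift K Z))"
    unfolding is_triangle_def using iW z1 zh by (simp add: hom_def)
  show ?thesis using tri_p5 Ttri rd zz unfolding Z_def by metis
qed

lemma L2: assumes d: "(u,v,w) \<in> cDist K" and g: "g \<in> hom K (cDom K v) W"
  and gu: "cComp K g u = cZero K (cDom K u) W"
  shows "\<exists>h \<in> hom K (cDom K w) W. cComp K h v = g"
proof -
  have W: "W \<in> cOb K" using hom_ob g by auto
  define Z where "Z = cZobj K"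
  have Z: "Z \<in> cOb K" using zobj Z_def by simp
  have X: "cDom K u \<in> cOb K" using dist_hom[OF d] hom_ob by blast
  have T2: "(cZero K Z W, cId K W, cZero K W (cShift K Z)) \<in> cDist K" using T2_dist W Z_def by simp
  have a: "cZero K (cDom K u) Z \<in> hom K (cDom K u) (cDom K (cZero K Z W))"
    using zero_hom X Z hom_dom[OF zero_hom[OF Z W]] by simp
  have b: "g \<in> hom K (cDom K v) (cDom K (cId K W))" using g hom_dom[OF id_hom[OF W]] by simp
  have e: "cComp K (cZero K Z W) (cZero K (cDom K u) Z) = cComp K g u"
    using comp_zero_r[OF zero_hom[OF Z W] X] gu by simp
  obtain c where "tri_morph K (u,v,w) (cZero K Z W, cId K W, cZero K W (cShift K Z)) (cZero K (cDom K u) Z) g c"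
    using tri_p6 d T2 a b e by blast
  then have c: "c \<in> hom K (cDom K w) (cDom K (cZero K W (cShift K Z)))" "cComp K (cId K W) g = cComp K c v"
    unfolding tri_morph_def by auto
  have "cDom K (cZero K W (cShift K Z)) = W" using hom_dom zero_hom W shift_ob Z by blast
  then show ?thesis using c comp_id_l[OF g] by auto
qed

lemma L1s: assumes d: "(u,v,w) \<in> cDist K"
  shows "cComp K (cShiftM K u) w = cZero K (cDom K w) (cShift K (cDom K v))"
proof -
  define X Y Z where "X = cDom K u" "Y = cDom K v" "Z = cDom K w"
  have u: "u \<in> hom K X Y" and v: "v \<in> hom K Y Z" and w: "w \<in> hom K Z (cShift K X)"
    using dist_hom[OF d] unfolding X_Y_Z_def by auto
  define f where "f = cShiftM K u"
  define n where "n = cNeg K f"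
  have f: "f \<in> hom K (cShift K X) (cShift K Y)" using shiftM_hom[OF u] f_def by simp
  have n: "n \<in> hom K (cShift K X) (cShift K Y)" using neg_hom[OF f] n_def by simp
  have d1: "(v, w, n) \<in> cDist K" using rot[OF d] f_def n_def by simp
  have d2: "(w, n, cNeg K (cShiftM K v)) \<in> cDist K" using rot[OF d1] .
  have sv: "cNeg K (cShiftM K v) \<in> hom K (cShift K Y) (cShift K Z)" using neg_hom shiftM_hom v by blast
  have nw: "cComp K n w = cZero K Z (cShift K Y)"
    using L1[OF d2] hom_dom[OF w] hom_dom[OF sv] by simp
  have Z: "Z \<in> cOb K" using hom_ob w by auto
  have "cComp K f w = cPlus K (cComp K f w) (cZero K Z (cShift K Y))"
    using plus_zero comp_hom[OF w f] by simp
  also have "\<dots> = cPlus K (cComp K f w) (cComp K n w)" using nw by simp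
  also have "\<dots> = cComp K (cPlus K f n) w" using distr[OF w f n] by simp
  also have "\<dots> = cComp K (cZero K (cShift K X) (cShift K Y)) w" using plus_neg f n_def by simp
  also have "\<dots> = cZero K Z (cShift K Y)" using comp_zero_l[OF w] hom_ob f by blast
  finally show ?thesis unfolding f_def X_Y_Z_def .
qed

lemma sum_closed: assumes I: "thick_ideal K I" and XI: "X \<in> I" and YI: "Y \<in> I"
  shows "cSum K X Y \<in> I"
proof -
  have X: "X \<in> cOb K" and Y: "Y \<in> cOb K" using thickD1[OF I] XI YI by auto
  define S where "S = cSum K X Y"
  note sf = sum_facts[OF X Y, folded S_def]
  have in1: "cIn1 K X Y \<in> hom K X S" and in2: "cIn2 K X Y \<in> hom K Y S"
    and pr1: "cPr1 K X Y \<in> hom K S X" and pr2: "cPr2 K X Y \<in> hom K S Y" using sf by auto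
  have S: "S \<in> cOb K" using sf by auto
  obtain v w where d: "(cIn1 K X Y, v, w) \<in> cDist K" using tri_p4 hom_ar[OF in1] by blast
  define C where "C = cDom K w"
  have dv: "cDom K v = S" using hom_cod[OF dist_hom(1)[OF d]] hom_cod[OF in1] by simp
  have du: "cDom K (cIn1 K X Y) = X" using hom_dom[OF in1] .
  have v: "v \<in> hom K S C" and w: "w \<in> hom K C (cShift K X)"
    using dist_hom[OF d] dv du unfolding C_def by auto
  have C: "C \<in> cOb K" using hom_ob v by auto
  have vin1: "cComp K v (cIn1 K X Y) = cZero K X C" using L1[OF d] du C_def by simp
  have sw: "cComp K (cShiftM K (cIn1 K X Y)) w = cZero K C (cShift K S)" using L1s[OF d] dv C_def by simp
  have w0: "w = cZero K C (cShift K X)"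
  proof -
    have "w = cComp K (cId K (cShift K X)) w" using comp_id_l[OF w] by simp
    also have "\<dots> = cComp K (cShiftM K (cComp K (cPr1 K X Y) (cIn1 K X Y))) w" using sf shift_id X by simp
    also have "\<dots> = cComp K (cComp K (cShiftM K (cPr1 K X Y)) (cShiftM K (cIn1 K X Y))) w"
      using shift_comp[OF in1 pr1] by simp
    also have "\<dots> = cComp K (cShiftM K (cPr1 K X Y)) (cComp K (cShiftM K (cIn1 K X Y)) w)"
      using assoc[OF w shiftM_hom[OF in1] shiftM_hom[OF pr1]] by simp
    also have "\<dots> = cZero K C (cShift K X)" using sw comp_zero_r[OF shiftM_hom[OF pr1] C] by simp
    finally show ?thesis .
  qed
  define \<phi> where "\<phi> = cComp K v (cIn2 K X Y)"
  have ph: "\<phi> \<in> hom K Y C" using comp_hom[OF in2 v] \<phi>_def by simp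
  have "cComp K (cPr2 K X Y) (cIn1 K X Y) = cZero K (cDom K (cIn1 K X Y)) Y" using sf du by simp
  then obtain \<psi> where ps: "\<psi> \<in> hom K C Y" "cComp K \<psi> v = cPr2 K X Y"
    using L2[OF d, of "cPr2 K X Y" Y] pr2 dv C_def by auto
  have psph: "cComp K \<psi> \<phi> = cId K Y"
    using assoc[OF in2 v ps(1)] ps(2) sf \<phi>_def by simp
  have vv: "cComp K v (cComp K (cIn2 K X Y) (cPr2 K X Y)) = v"
  proof -
    have i1p1: "cComp K (cIn1 K X Y) (cPr1 K X Y) \<in> hom K S S" using comp_hom[OF pr1 in1] .
    have i2p2: "cComp K (cIn2 K X Y) (cPr2 K X Y) \<in> hom K S S" using comp_hom[OF pr2 in2] .
    have "v = cComp K v (cId K S)" using comp_id_r[OF v] by simp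
    also have "\<dots> = cPlus K (cComp K v (cComp K (cIn1 K X Y) (cPr1 K X Y))) (cComp K v (cComp K (cIn2 K X Y) (cPr2 K X Y)))"
      using sf distl[OF i1p1 i2p2 v] by simp
    also have "cComp K v (cComp K (cIn1 K X Y) (cPr1 K X Y)) = cZero K S C"
      using assoc[OF pr1 in1 v] vin1 comp_zero_l[OF pr1 C] by simp
    finally show ?thesis using zero_plus[OF comp_hom[OF i2p2 v]] by simp
  qed
  have phps: "cComp K \<phi> \<psi> = cId K C"
  proof -
    define e where "e = cPlus K (cComp K \<phi> \<psi>) (cNeg K (cId K C))"
    have pp: "cComp K \<phi> \<psi> \<in> hom K C C" using comp_hom[OF ps(1) ph] .
    have ni: "cNeg K (cId K C) \<in> hom K C C" using neg_hom id_hom C by blast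
    have eh: "e \<in> hom K C C" using plus_hom[OF pp ni] e_def by simp
    have ppv: "cComp K (cComp K \<phi> \<psi>) v = v"
    proof -
      have "cComp K (cComp K \<phi> \<psi>) v = cComp K \<phi> (cComp K \<psi> v)" using assoc[OF v ps(1) ph] by simp
      also have "\<dots> = cComp K v (cComp K (cIn2 K X Y) (cPr2 K X Y))"
        using ps(2) \<phi>_def assoc[OF pr2 in2 v] by simp
      finally show ?thesis using vv by simp
    qed
    have niv: "cPlus K v (cComp K (cNeg K (cId K C)) v) = cZero K S C"
    proof -
      have "cPlus K v (cComp K (cNeg K (cId K C)) v) = cPlus K (cComp K (cId K C) v) (cComp K (cNeg K (cId K C)) v)"
        using comp_id_l[OF v] by simp
      also have "\<dots> = cComp K (cPlus K (cId K C) (cNeg K (cId K C))) v" using distr[OF v id_hom[OF C] ni] by simp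
      also have "\<dots> = cZero K S C" using plus_neg[OF id_hom[OF C]] comp_zero_l[OF v C] by simp
      finally show ?thesis .
    qed
    have ev: "cComp K e v = cZero K (cDom K v) C"
      using distr[OF v pp ni] ppv niv e_def dv by simp
    have eh': "e \<in> hom K (cDom K w) C" using eh C_def by simp
    obtain h where h: "h \<in> hom K (cDom K (cNeg K (cShiftM K (cIn1 K X Y)))) C" "cComp K h w = e"
      using L2[OF rot[OF d] eh' ev] by blast
    have hn: "cDom K (cNeg K (cShiftM K (cIn1 K X Y))) = cShift K X"
      using hom_dom[OF neg_hom[OF shiftM_hom[OF in1]]] .
    have "e = cZero K C C" using h(2) w0 comp_zero_r[OF h(1)[unfolded hn] C] by simp
    then have "cPlus K (cComp K \<phi> \<psi>) (cNeg K (cId K C)) = cZero K C C" using e_def by simp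
    then have "cPlus K (cPlus K (cComp K \<phi> \<psi>) (cNeg K (cId K C))) (cId K C) = cId K C"
      using zero_plus[OF id_hom[OF C]] by simp
    moreover have "cPlus K (cPlus K (cComp K \<phi> \<psi>) (cNeg K (cId K C))) (cId K C) = cComp K \<phi> \<psi>"
    proof -
      have "cPlus K (cPlus K (cComp K \<phi> \<psi>) (cNeg K (cId K C))) (cId K C)
          = cPlus K (cComp K \<phi> \<psi>) (cPlus K (cNeg K (cId K C)) (cId K C))" using plus_assoc[OF pp ni id_hom[OF C]] .
      also have "\<dots> = cPlus K (cComp K \<phi> \<psi>) (cZero K C C)" using plus_comm[OF ni id_hom[OF C]] plus_neg[OF id_hom[OF C]] by simp
      finally show ?thesis using plus_zero[OF pp] by simp
    qed
    ultimately show ?thesis by simp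
  qed
  have "isomorphic K Y C" using mk_iso(2)[OF ph ps(1) psph phps] .
  then have CI: "C \<in> I" using thick_iso[OF I YI C] by simp
  have "cDom K v \<in> I" using thickD_tri[OF I d] du XI CI unfolding C_def by simp
  then show ?thesis using dv S_def by simp
qed

end

context mdcK begin

lemma mon_p2: "\<forall>f \<in> cAr K. \<forall>g \<in> cAr K.
        cTenM K f g \<in> hom K (cTen K (cDom K f) (cDom K g)) (cTen K (cCod K f) (cCod K g))"
  using mon unfolding is_monoidal_def by (elim conjE) assumption
lemma mon_p3: "\<forall>A \<in> cOb K. \<forall>B \<in> cOb K. cTenM K (cId K A) (cId K B) = cId K (cTen K A B)"
  using mon unfolding is_monoidal_def by (elim conjE) assumption
lemma mon_p4: "\<forall>f \<in> cAr K. \<forall>f' \<in> cAr K. \<forall>g \<in> cAr K. \<forall>g' \<in> cAr K.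
        cCod K f = cDom K f' \<longrightarrow> cCod K g = cDom K g' \<longrightarrow>
        cTenM K (cComp K f' f) (cComp K g' g) = cComp K (cTenM K f' g') (cTenM K f g)"
  using mon unfolding is_monoidal_def by (elim conjE) assumption
lemma mon_p6: "\<forall>A \<in> cOb K. \<forall>B \<in> cOb K. \<forall>C \<in> cOb K.
        cAssoc K A B C \<in> hom K (cTen K (cTen K A B) C) (cTen K A (cTen K B C)) \<and>
        is_iso K (cAssoc K A B C)"
  using mon unfolding is_monoidal_def by (elim conjE) assumption

lemma ten_hom: "f \<in> hom K A B \<Longrightarrow> g \<in> hom K C D \<Longrightarrow> cTenM K f g \<in> hom K (cTen K A C) (cTen K B D)"
proof -
  assume f: "f \<in> hom K A B" and g: "g \<in> hom K C D"
  then have "f \<in> cAr K" "g \<in> cAr K" using homD by auto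
  then have "cTenM K f g \<in> hom K (cTen K (cDom K f) (cDom K g)) (cTen K (cCod K f) (cCod K g))"
    using mon_p2 by blast
  then show ?thesis using homD[OF f] homD[OF g] by simp
qed
lemma ten_id: "A \<in> cOb K \<Longrightarrow> B \<in> cOb K \<Longrightarrow> cTenM K (cId K A) (cId K B) = cId K (cTen K A B)"
  using mon_p3 by blast
lemma ten_comp: "f \<in> hom K A B \<Longrightarrow> f' \<in> hom K B B' \<Longrightarrow> g \<in> hom K C D \<Longrightarrow> g' \<in> hom K D D' \<Longrightarrow>
   cTenM K (cComp K f' f) (cComp K g' g) = cComp K (cTenM K f' g') (cTenM K f g)"
  using mon_p4 unfolding hom_def by simp
lemma assoc_iso: "A \<in> cOb K \<Longrightarrow> B \<in> cOb K \<Longrightarrow> C \<in> cOb K \<Longrightarrow>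
   isomorphic K (cTen K (cTen K A B) C) (cTen K A (cTen K B C))"
  using mon_p6 unfolding isomorphic_def by blast

lemma tex_B: assumes B: "B \<in> cOb K" shows
  "(\<forall>X \<in> cOb K. \<forall>Y \<in> cOb K. \<forall>f \<in> hom K X Y. \<forall>g \<in> hom K X Y.
          cTenM K (cId K B) (cPlus K f g) = cPlus K (cTenM K (cId K B) f) (cTenM K (cId K B) g) \<and>
          cTenM K (cPlus K f g) (cId K B) = cPlus K (cTenM K f (cId K B)) (cTenM K g (cId K B))) \<and>
       (\<exists>\<tau>. (\<forall>X \<in> cOb K. \<tau> X \<in> hom K (cTen K (cShift K X) B) (cShift K (cTen K X B)) \<and> is_iso K (\<tau> X)) \<and>
            (\<forall>u v w. (u, v, w) \<in> cDist K \<longrightarrow>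
               (cTenM K u (cId K B), cTenM K v (cId K B),
                cComp K (\<tau> (cDom K u)) (cTenM K w (cId K B))) \<in> cDist K))"
proof -
  have "\<forall>A \<in> cOb K.
       (\<forall>X \<in> cOb K. \<forall>Y \<in> cOb K. \<forall>f \<in> hom K X Y. \<forall>g \<in> hom K X Y.
          cTenM K (cId K A) (cPlus K f g) = cPlus K (cTenM K (cId K A) f) (cTenM K (cId K A) g) \<and>
          cTenM K (cPlus K f g) (cId K A) = cPlus K (cTenM K f (cId K A)) (cTenM K g (cId K A))) \<and>
       (\<exists>\<tau>. (\<forall>X \<in> cOb K. \<tau> X \<in> hom K (cTen K A (cShift K X)) (cShift K (cTen K A X)) \<and> is_iso K (\<tau> X)) \<and>
            (\<forall>f \<in> cAr K. cComp K (\<tau> (cCod K f)) (cTenM K (cId K A) (cShiftM K f)) =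
                          cComp K (cShiftM K (cTenM K (cId K A) f)) (\<tau> (cDom K f))) \<and>
            (\<forall>u v w. (u, v, w) \<in> cDist K \<longrightarrow>
               (cTenM K (cId K A) u, cTenM K (cId K A) v,
                cComp K (\<tau> (cDom K u)) (cTenM K (cId K A) w)) \<in> cDist K)) \<and>
       (\<exists>\<tau>. (\<forall>X \<in> cOb K. \<tau> X \<in> hom K (cTen K (cShift K X) A) (cShift K (cTen K X A)) \<and> is_iso K (\<tau> X)) \<and>
            (\<forall>f \<in> cAr K. cComp K (\<tau> (cCod K f)) (cTenM K (cShiftM K f) (cId K A)) =
                          cComp K (cShiftM K (cTenM K f (cId K A))) (\<tau> (cDom K f))) \<and>
            (\<forall>u v w. (u, v, w) \<in> cDist K \<longrightarrow>
               (cTenM K u (cId K A), cTenM K v (cId K A),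
                cComp K (\<tau> (cDom K u)) (cTenM K w (cId K A))) \<in> cDist K))"
    using tex unfolding tensor_exact_def by assumption
  note h = bspec[OF this B]
  have p1: "\<forall>X \<in> cOb K. \<forall>Y \<in> cOb K. \<forall>f \<in> hom K X Y. \<forall>g \<in> hom K X Y.
          cTenM K (cId K B) (cPlus K f g) = cPlus K (cTenM K (cId K B) f) (cTenM K (cId K B) g) \<and>
          cTenM K (cPlus K f g) (cId K B) = cPlus K (cTenM K f (cId K B)) (cTenM K g (cId K B))"
    using h by (rule conjunct1)
  obtain \<tau> where t1: "\<forall>X \<in> cOb K. \<tau> X \<in> hom K (cTen K (cShift K X) B) (cShift K (cTen K X B)) \<and> is_iso K (\<tau> X)"
    and t3: "\<forall>u v w. (u, v, w) \<in> cDist K \<longrightarrow>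
               (cTenM K u (cId K B), cTenM K v (cId K B),
                cComp K (\<tau> (cDom K u)) (cTenM K w (cId K B))) \<in> cDist K"
    using h[THEN conjunct2, THEN conjunct2] by (elim exE conjE)
  show ?thesis
    apply (rule conjI[OF p1])
    apply (rule exI[of _ \<tau>])
    using t1 t3 by (rule conjI)
qed

lemma ten_plus_r: "B \<in> cOb K \<Longrightarrow> f \<in> hom K X Y \<Longrightarrow> g \<in> hom K X Y \<Longrightarrow>
  cTenM K (cPlus K f g) (cId K B) = cPlus K (cTenM K f (cId K B)) (cTenM K g (cId K B))"
  using tex_B hom_ob by meson

lemma ten_shift_iso: assumes X: "X \<in> cOb K" and B: "B \<in> cOb K"
  shows "isomorphic K (cTen K (cShift K X) B) (cShift K (cTen K X B))"
  using tex_B[OF B] X unfolding isomorphic_def by blast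

lemma ten_tri: assumes d: "(u,v,w) \<in> cDist K" and B: "B \<in> cOb K"
  shows "\<exists>w'. (cTenM K u (cId K B), cTenM K v (cId K B), w') \<in> cDist K"
  using tex_B[OF B] d by blast

lemma ten_zero_r: assumes X: "X \<in> cOb K" and Y: "Y \<in> cOb K" and B: "B \<in> cOb K"
  shows "cTenM K (cZero K X Y) (cId K B) = cZero K (cTen K X B) (cTen K Y B)"
proof -
  have z: "cZero K X Y \<in> hom K X Y" using zero_hom X Y by auto
  have t: "cTenM K (cZero K X Y) (cId K B) \<in> hom K (cTen K X B) (cTen K Y B)" using ten_hom[OF z id_hom[OF B]] .
  have "cPlus K (cTenM K (cZero K X Y) (cId K B)) (cTenM K (cZero K X Y) (cId K B)) = cTenM K (cZero K X Y) (cId K B)"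
    using ten_plus_r[OF B z z] plus_zero[OF z] by simp
  then show ?thesis using idem_zero[OF t] by blast
qed

lemma ten_iso_r: assumes i: "isomorphic K Y Y'" and B: "B \<in> cOb K"
  shows "isomorphic K (cTen K Y B) (cTen K Y' B)"
proof -
  obtain f g where f: "f \<in> hom K Y Y'" "g \<in> hom K Y' Y" "cComp K g f = cId K Y" "cComp K f g = cId K Y'"
    using i isoD by blast
  have Y: "Y \<in> cOb K" "Y' \<in> cOb K" using hom_ob f by auto
  have iB: "cId K B \<in> hom K B B" using B by simp
  have 1: "cComp K (cTenM K g (cId K B)) (cTenM K f (cId K B)) = cId K (cTen K Y B)"
    using ten_comp[OF f(1) f(2) iB iB] f(3) comp_id_l[OF iB] ten_id[OF Y(1) B] by simp
  have 2: "cComp K (cTenM K f (cId K B)) (cTenM K g (cId K B)) = cId K (cTen K Y' B)"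
    using ten_comp[OF f(2) f(1) iB iB] f(4) comp_id_l[OF iB] ten_id[OF Y(2) B] by simp
  show ?thesis using mk_iso(2)[OF ten_hom[OF f(1) iB] ten_hom[OF f(2) iB] 1 2] .
qed

lemma ten_sum_iso: assumes X: "X \<in> cOb K" and X': "X' \<in> cOb K" and B: "B \<in> cOb K"
  shows "isomorphic K (cTen K (cSum K X X') B) (cSum K (cTen K X B) (cTen K X' B))"
proof -
  define S where "S = cSum K X X'"
  note sf = sum_facts[OF X X', folded S_def]
  have in1: "cIn1 K X X' \<in> hom K X S" and in2: "cIn2 K X X' \<in> hom K X' S"
    and pr1: "cPr1 K X X' \<in> hom K S X" and pr2: "cPr2 K X X' \<in> hom K S X'" and S: "S \<in> cOb K" using sf by auto
  have iB: "cId K B \<in> hom K B B" using B by simp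
  have cB: "cComp K (cId K B) (cId K B) = cId K B" using comp_id_l[OF iB] .
  let ?t = "\<lambda>f. cTenM K f (cId K B)"
  have p11: "cComp K (?t (cPr1 K X X')) (?t (cIn1 K X X')) = cId K (cTen K X B)"
    using ten_comp[OF in1 pr1 iB iB] cB sf ten_id[OF X B] by simp
  have p22: "cComp K (?t (cPr2 K X X')) (?t (cIn2 K X X')) = cId K (cTen K X' B)"
    using ten_comp[OF in2 pr2 iB iB] cB sf ten_id[OF X' B] by simp
  have p21: "cComp K (?t (cPr2 K X X')) (?t (cIn1 K X X')) = cZero K (cTen K X B) (cTen K X' B)"
    using ten_comp[OF in1 pr2 iB iB] cB sf ten_zero_r[OF X X' B] by simp
  have p12: "cComp K (?t (cPr1 K X X')) (?t (cIn2 K X X')) = cZero K (cTen K X' B) (cTen K X B)"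
    using ten_comp[OF in2 pr1 iB iB] cB sf ten_zero_r[OF X' X B] by simp
  have "cPlus K (cComp K (?t (cIn1 K X X')) (?t (cPr1 K X X'))) (cComp K (?t (cIn2 K X X')) (?t (cPr2 K X X')))
      = cPlus K (?t (cComp K (cIn1 K X X') (cPr1 K X X'))) (?t (cComp K (cIn2 K X X') (cPr2 K X X')))"
    using ten_comp[OF pr1 in1 iB iB] ten_comp[OF pr2 in2 iB iB] cB by simp
  also have "\<dots> = ?t (cPlus K (cComp K (cIn1 K X X') (cPr1 K X X')) (cComp K (cIn2 K X X') (cPr2 K X X')))"
    using ten_plus_r[OF B comp_hom[OF pr1 in1] comp_hom[OF pr2 in2]] by simp
  also have "\<dots> = cId K (cTen K S B)" using sf ten_id[OF S B] by simp
  finally have p5: "cPlus K (cComp K (?t (cIn1 K X X')) (?t (cPr1 K X X'))) (cComp K (?t (cIn2 K X X')) (?t (cPr2 K X X'))) = cId K (cTen K S B)" .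
  show ?thesis unfolding S_def[symmetric]
    by (rule biprod_iso[OF ten_hom[OF in1 iB] ten_hom[OF in2 iB] ten_hom[OF pr1 iB] ten_hom[OF pr2 iB] p11 p22 p21 p12 p5])
qed

end

context mdcK begin

lemma iso_closed2: "thick_ideal K I \<Longrightarrow> isomorphic K X Y \<Longrightarrow> X \<in> cOb K \<Longrightarrow> Y \<in> cOb K \<Longrightarrow> X \<in> I \<longleftrightarrow> Y \<in> I"
  using thick_iso iso_sym by blast

lemma N_thick: assumes M: "thick_ideal K M" and J: "thick_ideal K J"
  shows "thick_ideal K {X \<in> cOb K. \<forall>B \<in> J. cTen K X B \<in> M}" (is "thick_ideal K ?N")
proof (rule thickI)
  have JO: "\<And>B. B \<in> J \<Longrightarrow> B \<in> cOb K" using thickD1[OF J] by blast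
  have MO: "\<And>B. B \<in> M \<Longrightarrow> B \<in> cOb K" using thickD1[OF M] by blast
  show "?N \<subseteq> cOb K" by blast
  show "cZobj K \<in> ?N" using zobj thickD8[OF M thickD2[OF M]] JO by blast
  show "cShift K X \<in> ?N \<longleftrightarrow> X \<in> ?N" if X: "X \<in> cOb K" for X
  proof -
    have "cTen K (cShift K X) B \<in> M \<longleftrightarrow> cTen K X B \<in> M" if B: "B \<in> J" for B
    proof -
      have Bo: "B \<in> cOb K" using JO B by blast
      have XB: "cTen K X B \<in> cOb K" using ten_ob X Bo by blast
      have "cTen K (cShift K X) B \<in> M \<longleftrightarrow> cShift K (cTen K X B) \<in> M"
        using iso_closed2[OF M ten_shift_iso[OF X Bo]] ten_ob shift_ob X Bo XB by blast
      also have "\<dots> \<longleftrightarrow> cTen K X B \<in> M" using thickD3[OF M XB] .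
      finally show ?thesis .
    qed
    then show ?thesis using X shift_ob by blast
  qed
  show "(cDom K u \<in> ?N \<longrightarrow> cDom K v \<in> ?N \<longrightarrow> cDom K w \<in> ?N) \<and>
        (cDom K v \<in> ?N \<longrightarrow> cDom K w \<in> ?N \<longrightarrow> cDom K u \<in> ?N) \<and>
        (cDom K w \<in> ?N \<longrightarrow> cDom K u \<in> ?N \<longrightarrow> cDom K v \<in> ?N)" if d: "(u,v,w) \<in> cDist K" for u v w
  proof -
    have u: "u \<in> hom K (cDom K u) (cDom K v)" and v: "v \<in> hom K (cDom K v) (cDom K w)" using dist_hom[OF d] by auto
    have ob: "cDom K u \<in> cOb K" "cDom K v \<in> cOb K" "cDom K w \<in> cOb K" using u v hom_ob by auto
    have key: "(cTen K (cDom K u) B \<in> M \<longrightarrow> cTen K (cDom K v) B \<in> M \<longrightarrow> cTen K (cDom K w) B \<in> M) \<and>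
        (cTen K (cDom K v) B \<in> M \<longrightarrow> cTen K (cDom K w) B \<in> M \<longrightarrow> cTen K (cDom K u) B \<in> M) \<and>
        (cTen K (cDom K w) B \<in> M \<longrightarrow> cTen K (cDom K u) B \<in> M \<longrightarrow> cTen K (cDom K v) B \<in> M)" if B: "B \<in> J" for B
    proof -
      have Bo: "B \<in> cOb K" using JO B by blast
      have iB: "cId K B \<in> hom K B B" using Bo by simp
      obtain w' where d': "(cTenM K u (cId K B), cTenM K v (cId K B), w') \<in> cDist K" using ten_tri[OF d Bo] by blast
      have tu: "cTenM K u (cId K B) \<in> hom K (cTen K (cDom K u) B) (cTen K (cDom K v) B)" using ten_hom[OF u iB] .
      have tv: "cTenM K v (cId K B) \<in> hom K (cTen K (cDom K v) B) (cTen K (cDom K w) B)" using ten_hom[OF v iB] .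
      have e1: "cDom K (cTenM K u (cId K B)) = cTen K (cDom K u) B" using hom_dom[OF tu] .
      have e2: "cDom K (cTenM K v (cId K B)) = cTen K (cDom K v) B" using hom_dom[OF tv] .
      have e3: "cDom K w' = cTen K (cDom K w) B" using hom_cod[OF tv] hom_cod[OF dist_hom(2)[OF d']] by simp
      show ?thesis using thickD_tri[OF M d'] unfolding e1 e2 e3 .
    qed
    show ?thesis
    proof (intro conjI impI)
      assume "cDom K u \<in> ?N" "cDom K v \<in> ?N" then show "cDom K w \<in> ?N" using key ob by blast
    next
      assume "cDom K v \<in> ?N" "cDom K w \<in> ?N" then show "cDom K u \<in> ?N" using key ob by blast
    next
      assume "cDom K w \<in> ?N" "cDom K u \<in> ?N" then show "cDom K v \<in> ?N" using key ob by blast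
    qed
  qed
  show "X \<in> ?N" if a: "X \<in> cOb K" "X' \<in> cOb K" "Y \<in> ?N" "isomorphic K Y (cSum K X X')" for X X' Y
  proof -
    have "cTen K X B \<in> M" if B: "B \<in> J" for B
    proof -
      have Bo: "B \<in> cOb K" using JO B by blast
      have YB: "cTen K Y B \<in> M" using a(3) B by blast
      have "isomorphic K (cTen K Y B) (cSum K (cTen K X B) (cTen K X' B))"
        using iso_trans[OF ten_iso_r[OF a(4) Bo] ten_sum_iso[OF a(1,2) Bo]] .
      then show ?thesis using thickD7[OF M ten_ob[OF a(1) Bo] ten_ob[OF a(2) Bo] YB] by blast
    qed
    then show ?thesis using a(1) by blast
  qed
  show "cTen K A C \<in> ?N \<and> cTen K C A \<in> ?N" if a: "A \<in> ?N" "C \<in> cOb K" for A C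
  proof -
    have A: "A \<in> cOb K" using a by blast
    have 1: "cTen K (cTen K A C) B \<in> M" if B: "B \<in> J" for B
    proof -
      have Bo: "B \<in> cOb K" using JO B by blast
      have "cTen K C B \<in> J" using thickD9[OF J B a(2)] .
      then have "cTen K A (cTen K C B) \<in> M" using a(1) by blast
      moreover have "isomorphic K (cTen K A (cTen K C B)) (cTen K (cTen K A C) B)"
        using iso_sym[OF assoc_iso[OF A a(2) Bo]] .
      ultimately show ?thesis using thick_iso[OF M] ten_ob A a(2) Bo by blast
    qed
    have 2: "cTen K (cTen K C A) B \<in> M" if B: "B \<in> J" for B
    proof -
      have Bo: "B \<in> cOb K" using JO B by blast
      have "cTen K A B \<in> M" using a(1) B by blast
      then have "cTen K C (cTen K A B) \<in> M" using thickD9[OF M _ a(2)] by blast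
      moreover have "isomorphic K (cTen K C (cTen K A B)) (cTen K (cTen K C A) B)"
        using iso_sym[OF assoc_iso[OF a(2) A Bo]] .
      ultimately show ?thesis using thick_iso[OF M] ten_ob A a(2) Bo by blast
    qed
    show ?thesis using 1 2 ten_ob A a(2) by blast
  qed
qed

lemma maximal_prime: assumes M: "maximal_ideal K M" shows "prime_ideal K M"
  unfolding prime_ideal_def
proof (intro conjI allI impI)
  show PM: "proper_ideal K M" using M unfolding maximal_ideal_def by blast
  have TM: "thick_ideal K M" using PM unfolding proper_ideal_def by blast
  fix I J assume I: "thick_ideal K I" and J: "thick_ideal K J" and IJ: "\<forall>A\<in>I. \<forall>B\<in>J. cTen K A B \<in> M"
  show "I \<subseteq> M \<or> J \<subseteq> M"
  proof (cases "I \<subseteq> M")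
    case True then show ?thesis by blast
  next
    case False note nI = False
    define N where "N = {X \<in> cOb K. \<forall>B \<in> J. cTen K X B \<in> M}"
    have TN: "thick_ideal K N" using N_thick[OF TM J] N_def by simp
    have MN: "M \<subseteq> N" unfolding N_def using thickD1[OF TM] thickD1[OF J] thickD8[OF TM] by blast
    have IN: "I \<subseteq> N" unfolding N_def using thickD1[OF I] IJ by blast
    have MIo: "M \<union> I \<subseteq> cOb K" using thickD1[OF TM] thickD1[OF I] by blast
    have G: "thick_ideal K (gen_ideal K (M \<union> I))" using gen_thick[OF MIo] .
    have MG: "M \<subseteq> gen_ideal K (M \<union> I)" using gen_sub by blast
    have IG: "I \<subseteq> gen_ideal K (M \<union> I)" using gen_sub by blast
    have "\<not> proper_ideal K (gen_ideal K (M \<union> I))"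
    proof
      assume "proper_ideal K (gen_ideal K (M \<union> I))"
      then have "gen_ideal K (M \<union> I) = M" using M MG unfolding maximal_ideal_def by blast
      then show False using IG nI by blast
    qed
    then have "gen_ideal K (M \<union> I) = cOb K" using G unfolding proper_ideal_def by blast
    moreover have "gen_ideal K (M \<union> I) \<subseteq> N" using gen_least[OF TN] MN IN by blast
    ultimately have "cUnit K \<in> N" using unit_ob by blast
    then have u: "\<forall>B \<in> J. cTen K (cUnit K) B \<in> M" unfolding N_def by blast
    have "J \<subseteq> M"
    proof
      fix B assume B: "B \<in> J"
      have Bo: "B \<in> cOb K" using thickD1[OF J] B by blast
      have "cLunit K B \<in> hom K (cTen K (cUnit K) B) B \<and> is_iso K (cLunit K B)"
        using mon Bo unfolding is_monoidal_def by blast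
      then have "isomorphic K (cTen K (cUnit K) B) B" unfolding isomorphic_def by blast
      then show "B \<in> M" using thick_iso[OF TM] u B Bo by blast
    qed
    then show ?thesis by blast
  qed
qed

end

context mdcK begin

lemma gen_mono: "S \<subseteq> T \<Longrightarrow> T \<subseteq> cOb K \<Longrightarrow> gen_ideal K S \<subseteq> gen_ideal K T"
  using gen_least gen_thick gen_sub by (meson order_trans)

lemma key: assumes I: "proper_ideal K I" and J: "proper_ideal K J" and c: "coprime K I J"
  shows "\<exists>A\<in>I. \<exists>B\<in>J. gen_ideal K {A, B} = cOb K"
proof -
  have TI: "thick_ideal K I" and TJ: "thick_ideal K J" using I J unfolding proper_ideal_def by auto
  have IO: "I \<subseteq> cOb K" and JO: "J \<subseteq> cOb K" using thickD1 TI TJ by auto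
  define F where "F = (\<lambda>(A,B). gen_ideal K {A, B}) ` (I \<times> J)"
  have mF: "gen_ideal K {A, B} \<in> F" if "A \<in> I" "B \<in> J" for A B
    unfolding F_def using that by (simp add: image_iff) (metis case_prod_conv mem_Sigma_iff)
  have ne: "F \<noteq> {}" using mF[OF thickD2[OF TI] thickD2[OF TJ]] by blast
  have eF: "\<exists>A B. A \<in> I \<and> B \<in> J \<and> G = gen_ideal K {A, B}" if "G \<in> F" for G
    using that unfolding F_def by auto
  have th: "thick_ideal K G" if g: "G \<in> F" for G
  proof -
    obtain A B where "A \<in> I" "B \<in> J" "G = gen_ideal K {A, B}" using eF[OF g] by blast
    then have "{A, B} \<subseteq> cOb K" using IO JO by auto
    then show ?thesis using gen_thick \<open>G = gen_ideal K {A, B}\<close> by simp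
  qed
  have dir: "\<exists>L\<in>F. G \<subseteq> L \<and> H \<subseteq> L" if g: "G \<in> F" "H \<in> F" for G H
  proof -
    obtain A B where AB: "A \<in> I" "B \<in> J" "G = gen_ideal K {A, B}" using eF[OF g(1)] by blast
    obtain A' B' where AB': "A' \<in> I" "B' \<in> J" "H = gen_ideal K {A', B'}" using eF[OF g(2)] by blast
    have o: "A \<in> cOb K" "B \<in> cOb K" "A' \<in> cOb K" "B' \<in> cOb K" using AB AB' IO JO by auto
    define L where "L = gen_ideal K {cSum K A A', cSum K B B'}"
    have s1: "cSum K A A' \<in> I" using sum_closed[OF TI] AB AB' by blast
    have s2: "cSum K B B' \<in> J" using sum_closed[OF TJ] AB AB' by blast
    have LF: "L \<in> F" unfolding L_def using mF[OF s1 s2] .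
    have TL: "thick_ideal K L" using th[OF LF] .
    have m1: "cSum K A A' \<in> L" and m2: "cSum K B B' \<in> L" unfolding L_def using gen_sub[of "{cSum K A A', cSum K B B'}"] by auto
    have "A \<in> L" "A' \<in> L" "B \<in> L" "B' \<in> L"
      using thick_summand1[OF TL o(1,3) m1] thick_summand2[OF TL o(1,3) m1]
        thick_summand1[OF TL o(2,4) m2] thick_summand2[OF TL o(2,4) m2] by auto
    then have "G \<subseteq> L" "H \<subseteq> L" using gen_least[OF TL, of "{A,B}"] gen_least[OF TL, of "{A',B'}"] AB(3) AB'(3) by auto
    then show ?thesis using LF by blast
  qed
  have TU: "thick_ideal K (\<Union>F)" using thick_Union[OF ne th dir] by blast
  have "I \<union> J \<subseteq> \<Union>F"
  proof
    fix X assume "X \<in> I \<union> J"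
    then show "X \<in> \<Union>F"
    proof
      assume X: "X \<in> I"
      have "gen_ideal K {X, cZobj K} \<in> F" using mF[OF X thickD2[OF TJ]] .
      moreover have "X \<in> gen_ideal K {X, cZobj K}" using gen_sub[of "{X, cZobj K}"] by blast
      ultimately show ?thesis by blast
    next
      assume X: "X \<in> J"
      have "gen_ideal K {cZobj K, X} \<in> F" using mF[OF thickD2[OF TI] X] .
      moreover have "X \<in> gen_ideal K {cZobj K, X}" using gen_sub[of "{cZobj K, X}"] by blast
      ultimately show ?thesis by blast
    qed
  qed
  then have "gen_ideal K (I \<union> J) \<subseteq> \<Union>F" using gen_least[OF TU] by blast
  moreover have "gen_ideal K (I \<union> J) = cOb K" using c unfolding coprime_def .
  ultimately have "cUnit K \<in> \<Union>F" using unit_ob by blast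
  then obtain G where G: "G \<in> F" "cUnit K \<in> G" by blast
  obtain A B where AB: "A \<in> I" "B \<in> J" "G = gen_ideal K {A, B}" using eF[OF G(1)] by blast
  have "gen_ideal K {A, B} = cOb K" using unit_all[OF th[OF G(1)] G(2)] AB(3) by simp
  then show ?thesis using AB by blast
qed

lemma gen_pair: assumes "A \<in> cOb K" "B \<in> cOb K"
  shows "gen_ideal K (gen_ideal K {A} \<union> gen_ideal K {B}) = gen_ideal K {A, B}"
proof
  have o: "{A} \<subseteq> cOb K" "{B} \<subseteq> cOb K" "{A,B} \<subseteq> cOb K" using assms by auto
  have T: "thick_ideal K (gen_ideal K {A, B})" using gen_thick[OF o(3)] .
  have "gen_ideal K {A} \<subseteq> gen_ideal K {A, B}" "gen_ideal K {B} \<subseteq> gen_ideal K {A, B}"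
    using gen_least[OF T, of "{A}"] gen_least[OF T, of "{B}"] gen_sub[of "{A,B}"] by auto
  then show "gen_ideal K (gen_ideal K {A} \<union> gen_ideal K {B}) \<subseteq> gen_ideal K {A, B}"
    using gen_least[OF T] by blast
  have "gen_ideal K {A} \<union> gen_ideal K {B} \<subseteq> cOb K" using gen_Ob o by blast
  moreover have "{A, B} \<subseteq> gen_ideal K {A} \<union> gen_ideal K {B}" using gen_sub by auto
  ultimately show "gen_ideal K {A, B} \<subseteq> gen_ideal K (gen_ideal K {A} \<union> gen_ideal K {B})"
    using gen_mono by blast
qed

lemma a_to_c: assumes I: "proper_ideal K I" and J: "proper_ideal K J" and c: "coprime K I J"
  shows "\<exists>A B. A \<in> cOb K \<and> B \<in> cOb K \<and> proper_ideal K (gen_ideal K {A}) \<and> proper_ideal K (gen_ideal K {B})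
     \<and> gen_ideal K {A, B} = cOb K"
proof -
  obtain A B where AB: "A \<in> I" "B \<in> J" "gen_ideal K {A, B} = cOb K" using key[OF I J c] by blast
  have TI: "thick_ideal K I" and TJ: "thick_ideal K J" using I J unfolding proper_ideal_def by auto
  have o: "A \<in> cOb K" "B \<in> cOb K" using AB thickD1 TI TJ by auto
  have "gen_ideal K {A} \<subseteq> I" "gen_ideal K {B} \<subseteq> J" using gen_least TI TJ AB by auto
  then have "proper_ideal K (gen_ideal K {A})" "proper_ideal K (gen_ideal K {B})"
    using I J gen_thick o thickD1 TI TJ unfolding proper_ideal_def by (auto, blast+)
  then show ?thesis using o AB by blast
qed

end

context mdcK begin

lemma a_iff_b: "(\<exists>I J. proper_ideal K I \<and> proper_ideal K J \<and> coprime K I J)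
           \<longleftrightarrow> (\<exists>M1 M2. maximal_ideal K M1 \<and> maximal_ideal K M2 \<and> M1 \<noteq> M2)"
proof
  assume "\<exists>I J. proper_ideal K I \<and> proper_ideal K J \<and> coprime K I J"
  then obtain I J where I: "proper_ideal K I" and J: "proper_ideal K J" and c: "coprime K I J" by blast
  obtain M1 where M1: "maximal_ideal K M1" "I \<subseteq> M1" using exists_max[OF I] by blast
  obtain M2 where M2: "maximal_ideal K M2" "J \<subseteq> M2" using exists_max[OF J] by blast
  have "M1 \<noteq> M2"
  proof
    assume e: "M1 = M2"
    have P: "proper_ideal K M1" using M1 unfolding maximal_ideal_def by blast
    then have T: "thick_ideal K M1" unfolding proper_ideal_def by blast
    have "gen_ideal K (I \<union> J) \<subseteq> M1" using gen_least[OF T] M1(2) M2(2) e by blast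
    then have "cOb K \<subseteq> M1" using c unfolding coprime_def by simp
    then show False using P thickD1[OF T] unfolding proper_ideal_def by blast
  qed
  then show "\<exists>M1 M2. maximal_ideal K M1 \<and> maximal_ideal K M2 \<and> M1 \<noteq> M2" using M1 M2 by blast
next
  assume "\<exists>M1 M2. maximal_ideal K M1 \<and> maximal_ideal K M2 \<and> M1 \<noteq> M2"
  then obtain M1 M2 where M: "maximal_ideal K M1" "maximal_ideal K M2" "M1 \<noteq> M2" by blast
  have P1: "proper_ideal K M1" and P2: "proper_ideal K M2" using M unfolding maximal_ideal_def by auto
  have T1: "thick_ideal K M1" and T2: "thick_ideal K M2" using P1 P2 unfolding proper_ideal_def by auto
  have O: "M1 \<union> M2 \<subseteq> cOb K" using thickD1[OF T1] thickD1[OF T2] by blast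
  have G: "thick_ideal K (gen_ideal K (M1 \<union> M2))" using gen_thick[OF O] .
  have S1: "M1 \<subseteq> gen_ideal K (M1 \<union> M2)" and S2: "M2 \<subseteq> gen_ideal K (M1 \<union> M2)"
    using gen_sub[of "M1 \<union> M2"] by auto
  have "coprime K M1 M2" unfolding coprime_def
  proof (rule ccontr)
    assume "gen_ideal K (M1 \<union> M2) \<noteq> cOb K"
    then have "proper_ideal K (gen_ideal K (M1 \<union> M2))" using G unfolding proper_ideal_def by blast
    then have "gen_ideal K (M1 \<union> M2) = M1" using M(1) S1 unfolding maximal_ideal_def by blast
    then have "M2 \<subseteq> M1" using S2 by blast
    then have "M1 = M2" using M(2) P1 unfolding maximal_ideal_def by blast
    then show False using M(3) by blast
  qed
  then show "\<exists>I J. proper_ideal K I \<and> proper_ideal K J \<and> coprime K I J" using P1 P2 by blast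
qed

lemma a_iff_c: "(\<exists>I J. proper_ideal K I \<and> proper_ideal K J \<and> coprime K I J)
           \<longleftrightarrow> (\<exists>I J. principal_ideal K I \<and> principal_ideal K J \<and>
                       proper_ideal K I \<and> proper_ideal K J \<and> coprime K I J)"
proof
  assume "\<exists>I J. proper_ideal K I \<and> proper_ideal K J \<and> coprime K I J"
  then obtain I J where I: "proper_ideal K I" and J: "proper_ideal K J" and c: "coprime K I J" by blast
  obtain A B where AB: "A \<in> cOb K" "B \<in> cOb K" "proper_ideal K (gen_ideal K {A})" "proper_ideal K (gen_ideal K {B})"
     "gen_ideal K {A, B} = cOb K" using a_to_c[OF I J c] by blast
  have "coprime K (gen_ideal K {A}) (gen_ideal K {B})" unfolding coprime_def using gen_pair[OF AB(1,2)] AB(5) by simp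
  moreover have "principal_ideal K (gen_ideal K {A})" "principal_ideal K (gen_ideal K {B})"
    unfolding principal_ideal_def using AB(1,2) by auto
  ultimately show "\<exists>I J. principal_ideal K I \<and> principal_ideal K J \<and>
                       proper_ideal K I \<and> proper_ideal K J \<and> coprime K I J" using AB(3,4) by blast
next
  assume "\<exists>I J. principal_ideal K I \<and> principal_ideal K J \<and>
                       proper_ideal K I \<and> proper_ideal K J \<and> coprime K I J"
  then show "\<exists>I J. proper_ideal K I \<and> proper_ideal K J \<and> coprime K I J" by blast
qed

lemma supp_sub: "supp K A \<subseteq> Spc K" unfolding supp_def by blast
lemma spc_proper: "P \<in> Spc K \<Longrightarrow> proper_ideal K P" unfolding Spc_def prime_ideal_def by simp
lemma proper_thick: "proper_ideal K P \<Longrightarrow> thick_ideal K P" unfolding proper_ideal_def by simp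
lemma Ob_sub_not_proper: "proper_ideal K P \<Longrightarrow> cOb K \<subseteq> P \<Longrightarrow> False"
  unfolding proper_ideal_def using thickD1 by blast

lemma a_iff_d: "(\<exists>I J. proper_ideal K I \<and> proper_ideal K J \<and> coprime K I J)
           \<longleftrightarrow> (\<exists>Z1 Z2. spc_closed K Z1 \<and> spc_closed K Z2 \<and>
                         Z1 \<subset> Spc K \<and> Z2 \<subset> Spc K \<and> Spc K = Z1 \<union> Z2)"
proof
  assume "\<exists>I J. proper_ideal K I \<and> proper_ideal K J \<and> coprime K I J"
  then obtain I J where I: "proper_ideal K I" and J: "proper_ideal K J" and c: "coprime K I J" by blast
  obtain A B where AB: "A \<in> cOb K" "B \<in> cOb K" "proper_ideal K (gen_ideal K {A})" "proper_ideal K (gen_ideal K {B})"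
     "gen_ideal K {A, B} = cOb K" using a_to_c[OF I J c] by blast
  have cl: "spc_closed K (supp K X)" if "X \<in> cOb K" for X
    unfolding spc_closed_def
    apply (rule exI[of _ "{X}"]) using that supp_sub by auto
  have ps: "supp K X \<subset> Spc K" if X: "X \<in> cOb K" and P: "proper_ideal K (gen_ideal K {X})" for X
  proof -
    obtain M where M: "maximal_ideal K M" "gen_ideal K {X} \<subseteq> M" using exists_max[OF P] by blast
    have "M \<in> Spc K" using maximal_prime[OF M(1)] unfolding Spc_def by simp
    moreover have "X \<in> M" using M(2) gen_sub[of "{X}"] by blast
    ultimately show ?thesis using supp_sub unfolding supp_def by blast
  qed
  have un: "Spc K = supp K A \<union> supp K B"
  proof
    show "supp K A \<union> supp K B \<subseteq> Spc K" using supp_sub by blast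
    show "Spc K \<subseteq> supp K A \<union> supp K B"
    proof
      fix P assume P: "P \<in> Spc K"
      show "P \<in> supp K A \<union> supp K B"
      proof (rule ccontr)
        assume "P \<notin> supp K A \<union> supp K B"
        then have "A \<in> P" "B \<in> P" using P unfolding supp_def by auto
        have PP: "proper_ideal K P" using spc_proper[OF P] .
        have TP: "thick_ideal K P" using proper_thick[OF PP] .
        have "{A, B} \<subseteq> P" using \<open>A \<in> P\<close> \<open>B \<in> P\<close> by simp
        then have "gen_ideal K {A, B} \<subseteq> P" using gen_least[OF TP] by simp
        then show False using AB(5) Ob_sub_not_proper[OF PP] by simp
      qed
    qed
  qed
  show "\<exists>Z1 Z2. spc_closed K Z1 \<and> spc_closed K Z2 \<and> Z1 \<subset> Spc K \<and> Z2 \<subset> Spc K \<and> Spc K = Z1 \<union> Z2"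
    apply (rule exI[of _ "supp K A"], rule exI[of _ "supp K B"])
    using cl[OF AB(1)] cl[OF AB(2)] ps[OF AB(1,3)] ps[OF AB(2,4)] un by simp
next
  assume "\<exists>Z1 Z2. spc_closed K Z1 \<and> spc_closed K Z2 \<and> Z1 \<subset> Spc K \<and> Z2 \<subset> Spc K \<and> Spc K = Z1 \<union> Z2"
  then obtain Z1 Z2 where Z: "spc_closed K Z1" "spc_closed K Z2" "Z1 \<subset> Spc K" "Z2 \<subset> Spc K" "Spc K = Z1 \<union> Z2"
    by blast
  obtain \<A>1 where A1: "\<A>1 \<subseteq> cOb K" "Z1 = Spc K \<inter> (\<Inter>A \<in> \<A>1. supp K A)" using Z(1) unfolding spc_closed_def by blast
  obtain \<A>2 where A2: "\<A>2 \<subseteq> cOb K" "Z2 = Spc K \<inter> (\<Inter>A \<in> \<A>2. supp K A)" using Z(2) unfolding spc_closed_def by blast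
  have pick: "\<exists>A \<in> \<A>. \<exists>P \<in> Spc K. A \<in> P"
    if h: "\<A> \<subseteq> cOb K" "Spc K \<inter> (\<Inter>A \<in> \<A>. supp K A) \<subset> Spc K" for \<A>
  proof -
    obtain P where P: "P \<in> Spc K" "P \<notin> (\<Inter>A \<in> \<A>. supp K A)" using h(2) by blast
    then obtain A where "A \<in> \<A>" "P \<notin> supp K A" by blast
    then show ?thesis using P(1) unfolding supp_def by blast
  qed
  obtain A1 P1 where a1: "A1 \<in> \<A>1" "P1 \<in> Spc K" "A1 \<in> P1" using pick[OF A1(1)] Z(3) A1(2) by blast
  obtain A2 P2 where a2: "A2 \<in> \<A>2" "P2 \<in> Spc K" "A2 \<in> P2" using pick[OF A2(1)] Z(4) A2(2) by blast
  have o: "A1 \<in> cOb K" "A2 \<in> cOb K" using a1 a2 A1 A2 by auto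
  have prp: "proper_ideal K (gen_ideal K {X})" if "X \<in> cOb K" "P \<in> Spc K" "X \<in> P" for X P
  proof -
    have PP: "proper_ideal K P" using spc_proper[OF that(2)] .
    have TP: "thick_ideal K P" using proper_thick[OF PP] .
    have s: "gen_ideal K {X} \<subseteq> P" using gen_least[OF TP] that(3) by simp
    have "thick_ideal K (gen_ideal K {X})" using gen_thick that(1) by simp
    moreover have "gen_ideal K {X} \<noteq> cOb K" using s Ob_sub_not_proper[OF PP] by auto
    ultimately show ?thesis unfolding proper_ideal_def by simp
  qed
  have p1: "proper_ideal K (gen_ideal K {A1})" using prp[OF o(1) a1(2,3)] .
  have p2: "proper_ideal K (gen_ideal K {A2})" using prp[OF o(2) a2(2,3)] .
  have "coprime K (gen_ideal K {A1}) (gen_ideal K {A2})" unfolding coprime_def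
  proof (rule ccontr)
    define G where "G = gen_ideal K (gen_ideal K {A1} \<union> gen_ideal K {A2})"
    assume "gen_ideal K (gen_ideal K {A1} \<union> gen_ideal K {A2}) \<noteq> cOb K"
    then have ne: "G \<noteq> cOb K" using G_def by simp
    have "gen_ideal K {A1} \<union> gen_ideal K {A2} \<subseteq> cOb K" using gen_Ob o by blast
    then have "thick_ideal K G" using gen_thick G_def by blast
    then have "proper_ideal K G" using ne unfolding proper_ideal_def by blast
    then obtain M where M: "maximal_ideal K M" "G \<subseteq> M" using exists_max by blast
    have MS: "M \<in> Spc K" using maximal_prime[OF M(1)] unfolding Spc_def by simp
    have "A1 \<in> G" "A2 \<in> G" unfolding G_def
      using gen_sub[of "{A1}"] gen_sub[of "{A2}"] gen_sub[of "gen_ideal K {A1} \<union> gen_ideal K {A2}"] by blast+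
    then have "A1 \<in> M" "A2 \<in> M" using M(2) by blast+
    then have "M \<notin> Z1" "M \<notin> Z2" using a1(1) a2(1) A1(2) A2(2) unfolding supp_def by blast+
    then show False using MS Z(5) by blast
  qed
  then show "\<exists>I J. proper_ideal K I \<and> proper_ideal K J \<and> coprime K I J" using p1 p2 by blast
qed

end

theorem theoremB:
  fixes K :: "('o, 'm) mdc"
  assumes "MDC K"
  shows "((\<exists>I J. proper_ideal K I \<and> proper_ideal K J \<and> coprime K I J)
           \<longleftrightarrow> (\<exists>M1 M2. maximal_ideal K M1 \<and> maximal_ideal K M2 \<and> M1 \<noteq> M2)) \<and>
         ((\<exists>I J. proper_ideal K I \<and> proper_ideal K J \<and> coprime K I J)
           \<longleftrightarrow> (\<exists>I J. principal_ideal K I \<and> principal_ideal K J \<and>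
                       proper_ideal K I \<and> proper_ideal K J \<and> coprime K I J)) \<and>
         ((\<exists>I J. proper_ideal K I \<and> proper_ideal K J \<and> coprime K I J)
           \<longleftrightarrow> (\<exists>Z1 Z2. spc_closed K Z1 \<and> spc_closed K Z2 \<and>
                         Z1 \<subset> Spc K \<and> Z2 \<subset> Spc K \<and> Spc K = Z1 \<union> Z2))"
proof -
  interpret mdcK K by unfold_locales (rule assms)
  show ?thesis using a_iff_b a_iff_c a_iff_d by blast
qed

end
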